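(* Let $\alpha>-1$ and let $\varphi(z)=\frac{az+b}{cz+d}$ be a linear fractional self-map of $\mathbb{D}$ with $\|\varphi\|_\infty=\sup_{z\in\mathbb{D}}|\varphi(z)|<1$, and let $\sigma(z)=\frac{\overline{a}z-\overline{c}}{-\overline{b}z+\overline{d}}$ be its Krein adjoint. For $w\in\mathbb{D}$ put $K^{(1)}_w(z)=\frac{(\alpha+2)z}{(1-\overline{w}z)^{\alpha+3}}$. Then, as operators on $A^2_\alpha$, $$D_\varphi^*\,T_{K^{(1)}_{\sigma(0)}}^*=T_{K^{(1)}_{\varphi(0)}}\,D_\sigma,$$ where the adjoints are taken with respect to the inner product of $A^2_\alpha$.
   Context: $\mathbb{D}$ is the open unit disk and $dA$ is normalized Lebesgue area measure on $\mathbb{D}$. For $\alpha>-1$, the weighted Bergman space $A^2_\alpha$ is the Hilbert space of analytic $f$ on $\mathbb{D}$ with $\|f\|_\alpha^2=(\alpha+1)\int_{\mathbb{D}}|f(z)|^2(1-|z|^2)^\alpha\,dA(z)<\infty$; its reproducing kernel is $K_w(z)=(1-\overline{w}z)^{-(\alpha+2)}$ and $K^{(1)}_w$ as defined satisfies $f'(w)=\langle f,K^{(1)}_w\rangle$. $D_\varphi f=f'\circ\varphi$, and for a bounded analytic $\psi$ on $\mathbb{D}$, $T_\psi f=\psi f$ is the multiplication (Toeplitz) operator. Note $\varphi(0)=b/d$ and $\sigma(0)=-\overline{c}/\overline{d}$. *)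

theory Defs
  imports "HOL-Analysis.Analysis"
begin

abbreviation unit_disk :: "complex set" where
  "unit_disk \<equiv> ball 0 1"

text \<open>Weighted Bergman space A^2_alpha (as a set of functions on the disk).
  Normalized area measure dA = (1/pi) * Lebesgue measure on the plane.\<close>
definition bergman_space :: "real \<Rightarrow> (complex \<Rightarrow> complex) set" where
  "bergman_space \<alpha> = {f. f holomorphic_on unit_disk \<and>
      set_integrable lborel unit_disk
        (\<lambda>z. (cmod (f z))\<^sup>2 * (1 - (cmod z)\<^sup>2) powr \<alpha>)}"

definition bergman_inner :: "real \<Rightarrow> (complex \<Rightarrow> complex) \<Rightarrow> (complex \<Rightarrow> complex) \<Rightarrow> complex" where
  "bergman_inner \<alpha> f g = complex_of_real ((\<alpha> + 1) / pi) *
      (LINT z : unit_disk | lborel. f z * cnj (g z) * complex_of_real ((1 - (cmod z)\<^sup>2) powr \<alpha>))"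

definition K1 :: "real \<Rightarrow> complex \<Rightarrow> complex \<Rightarrow> complex" where
  "K1 \<alpha> w z = complex_of_real (\<alpha> + 2) * z / (1 - cnj w * z) powr complex_of_real (\<alpha> + 3)"

definition lfm :: "complex \<Rightarrow> complex \<Rightarrow> complex \<Rightarrow> complex \<Rightarrow> complex \<Rightarrow> complex" where
  "lfm a b c d z = (a * z + b) / (c * z + d)"

definition Dop :: "(complex \<Rightarrow> complex) \<Rightarrow> (complex \<Rightarrow> complex) \<Rightarrow> complex \<Rightarrow> complex" where
  "Dop \<phi> f = (\<lambda>z. deriv f (\<phi> z))"

definition Tmul :: "(complex \<Rightarrow> complex) \<Rightarrow> (complex \<Rightarrow> complex) \<Rightarrow> complex \<Rightarrow> complex" where
  "Tmul \<psi> f = (\<lambda>z. \<psi> z * f z)"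

end

theory Submission
  imports Defs "HOL-Complex_Analysis.Complex_Analysis"
begin

abbreviation "PP \<equiv> (lborel \<Otimes>\<^sub>M lborel :: (real \<times> real) measure)"

lemma emeasure_lborel_translate:
  assumes "B \<in> sets borel"
  shows "emeasure lborel ((\<lambda>y::real. y + c) -` B) = emeasure lborel B"
proof -
  have "emeasure lborel B = emeasure (distr lborel borel ((+) c)) B"
    by (simp add: lborel_distr_plus)
  also have "\<dots> = emeasure lborel ((+) c -` B)"
    using assms by (subst emeasure_distr) auto
  moreover have "(\<lambda>y. y + c) = (+) c" by (auto simp: fun_eq_iff)
  ultimately show ?thesis by simp
qed

lemma shear_y: "distr PP PP (\<lambda>(x,y). (x, y + b*x)) = PP"
proof (rule measure_eqI)
  show "sets (distr PP PP (\<lambda>(x,y). (x, y + b*x))) = sets PP" by simp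
  fix A assume A: "A \<in> sets (distr PP PP (\<lambda>(x,y). (x, y + b*x)))"
  hence A': "A \<in> sets PP" by simp
  have meas: "(\<lambda>(x,y). (x, y + b*x)) \<in> PP \<rightarrow>\<^sub>M PP" by measurable
  let ?T = "(\<lambda>(x::real,y::real). (x, y + b*x))"
  have "emeasure (distr PP PP ?T) A = emeasure PP (?T -` A \<inter> space PP)"
    by (rule emeasure_distr[OF meas A'])
  also have "\<dots> = (\<integral>\<^sup>+x. emeasure lborel (Pair x -` (?T -` A \<inter> space PP)) \<partial>lborel)"
    by (rule lborel.emeasure_pair_measure_alt) (use meas A' in measurable)
  also have "\<dots> = (\<integral>\<^sup>+x. emeasure lborel (Pair x -` A) \<partial>lborel)"
  proof (rule nn_integral_cong)
    fix x :: real
    have "Pair x -` (?T -` A \<inter> space PP) = (\<lambda>y. y + b*x) -` (Pair x -` A)"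
      by (auto simp: space_pair_measure)
    moreover have "Pair x -` A \<in> sets borel" using A' by (simp add: sets_Pair1)
    ultimately show "emeasure lborel (Pair x -` (?T -` A \<inter> space PP)) = emeasure lborel (Pair x -` A)"
      by (simp add: emeasure_lborel_translate)
  qed
  also have "\<dots> = emeasure PP A"
    by (rule lborel.emeasure_pair_measure_alt[symmetric]) (use A' in simp)
  finally show "emeasure (distr PP PP ?T) A = emeasure PP A" .
qed

lemma swap_PP: "distr PP PP (\<lambda>(x,y). (y,x)) = PP"
  using lborel_pair.distr_pair_swap[symmetric] by simp

lemma shear_x: "distr PP PP (\<lambda>(x,y). (x + a*y, y)) = PP"
proof -
  let ?sw = "\<lambda>(x::real,y::real). (y,x)"
  let ?Sx = "\<lambda>(x::real,y::real). (x + a*y, y)"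
  let ?Sy = "\<lambda>(x::real,y::real). (x, y + a*x)"
  have m1: "?sw \<in> PP \<rightarrow>\<^sub>M PP" by measurable
  have m2: "?Sx \<in> PP \<rightarrow>\<^sub>M PP" by measurable
  have m3: "?Sy \<in> PP \<rightarrow>\<^sub>M PP" by measurable
  have "distr PP PP ?Sx = distr (distr PP PP ?sw) PP ?Sx" by (simp add: swap_PP)
  also have "\<dots> = distr PP PP (?Sx \<circ> ?sw)" by (rule distr_distr[OF m2 m1])
  also have "?Sx \<circ> ?sw = ?sw \<circ> ?Sy" by (auto simp: fun_eq_iff algebra_simps)
  also have "distr PP PP (?sw \<circ> ?Sy) = distr (distr PP PP ?Sy) PP ?sw"
    by (rule distr_distr[OF m1 m3, symmetric])
  also have "\<dots> = PP" by (simp add: shear_y swap_PP)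
  finally show ?thesis .
qed

lemma lborel_complex_eq:
  "(lborel :: complex measure) = distr PP borel (\<lambda>(x,y). Complex x y)"
proof (rule lborel_eqI)
  fix l u :: complex
  assume le: "\<And>b. b \<in> Basis \<Longrightarrow> l \<bullet> b \<le> u \<bullet> b"
  have le1: "Re l \<le> Re u" and le2: "Im l \<le> Im u"
    using le[of 1] le[of \<i>] by (auto simp: Basis_complex_def inner_complex_def)
  have "(\<lambda>(x,y). Complex x y) -` box l u \<inter> space (lborel \<Otimes>\<^sub>M lborel) =
        {Re l<..<Re u} \<times> {Im l<..<Im u}"
    by (auto simp: box_def Basis_complex_def inner_complex_def space_pair_measure)
  moreover have "(\<lambda>(x,y). Complex x y) \<in> lborel \<Otimes>\<^sub>M lborel \<rightarrow>\<^sub>M borel"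
    unfolding Complex_eq case_prod_beta by measurable
  ultimately show "emeasure (distr (lborel \<Otimes>\<^sub>M lborel) borel (\<lambda>(x,y). Complex x y)) (box l u) =
       (\<Prod>b\<in>Basis. (u - l) \<bullet> b)"
    using le1 le2
    by (simp add: emeasure_distr lborel.emeasure_pair_measure_Times Basis_complex_def
        inner_complex_def ennreal_mult)
qed simp

lemma lborel_rotate:
  fixes e :: complex
  assumes e1: "cmod e = 1" and e2: "Im e \<noteq> 0"
  shows "distr lborel borel (\<lambda>z. e * z) = lborel"
proof -
  define b where "b = Im e"
  define a where "a = - (1 - Re e) / Im e"
  let ?C = "\<lambda>(x::real,y::real). Complex x y"
  let ?S1 = "\<lambda>(x::real,y::real). (x + a*y, y)"
  let ?S2 = "\<lambda>(x::real,y::real). (x, y + b*x)"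
  have mC: "?C \<in> PP \<rightarrow>\<^sub>M borel" unfolding Complex_eq case_prod_beta by measurable
  have m1: "?S1 \<in> PP \<rightarrow>\<^sub>M PP" by measurable
  have m2: "?S2 \<in> PP \<rightarrow>\<^sub>M PP" by measurable
  have me: "(\<lambda>z. e * z) \<in> (borel :: complex measure) \<rightarrow>\<^sub>M borel" by measurable
  have ee: "(Re e)^2 + (Im e)^2 = 1"
    using e1 unfolding cmod_def by (simp add: power2_eq_square)
  have key: "(\<lambda>z. e * z) \<circ> ?C = ?C \<circ> ?S1 \<circ> ?S2 \<circ> ?S1"
  proof (rule ext, clarsimp)
    fix x y :: real
    have "a * b = Re e - 1" unfolding a_def b_def using e2 by (simp add: field_simps)
    moreover have "a * (2 + a*b) = - Im e"
    proof -
      have "a * (2 + a*b) = a * (1 + Re e)" using \<open>a * b = Re e - 1\<close> by simp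
      also have "\<dots> = - (1 - (Re e)^2) / Im e" unfolding a_def by (simp add: power2_eq_square algebra_simps)
      also have "\<dots> = - Im e" using ee e2 by (simp add: power2_eq_square field_simps)
      finally show ?thesis .
    qed
    ultimately have f1: "1 + a * Im e = Re e" and f2: "a * 2 + a * (a * Im e) = - Im e"
      unfolding b_def by (simp_all add: algebra_simps)
    show "e * Complex x y = Complex (x + a * y + a * (y + b * (x + a * y))) (y + b * (x + a * y))"
      unfolding b_def complex_eq_iff
      using arg_cong[OF f1, of "\<lambda>t. x*t"] arg_cong[OF f2, of "\<lambda>t. y*t"] arg_cong[OF f1, of "\<lambda>t. y*t"]
      by (simp add: algebra_simps)
  qed
  have "distr lborel borel (\<lambda>z. e * z) = distr (distr PP borel ?C) borel (\<lambda>z. e * z)"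
    by (simp flip: lborel_complex_eq)
  also have "\<dots> = distr PP borel ((\<lambda>z. e * z) \<circ> ?C)"
    by (rule distr_distr[OF me mC])
  also have "\<dots> = distr PP borel (?C \<circ> ?S1 \<circ> ?S2 \<circ> ?S1)" by (simp only: key)
  also have "\<dots> = distr (distr PP PP ?S1) borel (?C \<circ> ?S1 \<circ> ?S2)"
    by (rule distr_distr[symmetric]) (use mC m1 m2 in measurable)
  also have "\<dots> = distr (distr PP PP ?S2) borel (?C \<circ> ?S1)"
    by (simp add: shear_x, rule distr_distr[symmetric]) (use mC m1 m2 in measurable)
  also have "\<dots> = distr (distr PP PP ?S1) borel ?C"
    by (simp add: shear_y, rule distr_distr[symmetric]) (use mC m1 m2 in measurable)
  also have "\<dots> = lborel" by (simp add: shear_x flip: lborel_complex_eq)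
  finally show ?thesis .
qed

lemma emeasure_disk: "r \<ge> 0 \<Longrightarrow> emeasure lborel (ball (0::complex) r) = ennreal (pi * r^2)"
  by (simp add: emeasure_ball unit_ball_vol_2)

lemma emeasure_cdisk: "r \<ge> 0 \<Longrightarrow> emeasure lborel (cball (0::complex) r) = ennreal (pi * r^2)"
  by (simp add: emeasure_cball unit_ball_vol_2)

lemma radial_distr:
  "distr (restrict_space lborel unit_disk) borel (\<lambda>z. (cmod z)^2) =
   density lborel (\<lambda>t. ennreal pi * indicator {0..<1} t)"
proof (rule measure_eqI_lessThan)
  let ?M = "distr (restrict_space lborel unit_disk) borel (\<lambda>z. (cmod z)^2)"
  let ?N = "density lborel (\<lambda>t::real. ennreal pi * indicator {0..<1} t)"
  show "sets ?M = sets borel" by simp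
  show "sets ?N = sets borel" by simp
  have qm: "(\<lambda>z::complex. (cmod z)^2) \<in> restrict_space lborel unit_disk \<rightarrow>\<^sub>M borel"
    by (rule measurable_restrict_space1) measurable
  have eM: "emeasure ?M {x<..} = emeasure lborel ({z. x < (cmod z)^2} \<inter> unit_disk)" for x
  proof -
    have "emeasure ?M {x<..} = emeasure (restrict_space lborel unit_disk) ((\<lambda>z. (cmod z)^2) -` {x<..} \<inter> unit_disk)"
      by (subst emeasure_distr[OF qm]) (auto simp: space_restrict_space)
    also have "\<dots> = emeasure lborel ((\<lambda>z. (cmod z)^2) -` {x<..} \<inter> unit_disk)"
      by (subst emeasure_restrict_space) auto
    finally show ?thesis by (simp add: vimage_def Int_def)
  qed
  have eM2: "emeasure ?M {x<..} = ennreal (if x < 0 then pi else if x < 1 then pi * (1 - x) else 0)" for x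
  proof (cases "x < 0")
    case True
    hence "{z. x < (cmod z)^2} \<inter> unit_disk = unit_disk"
      by auto (meson less_le_trans zero_le_power2)
    thus ?thesis using True by (simp add: eM emeasure_disk)
  next
    case False
    show ?thesis
    proof (cases "x < 1")
      case True
      have sq: "sqrt x < 1" using True False by simp
      have iff: "x < (cmod z)^2 \<longleftrightarrow> \<not> cmod z \<le> sqrt x" for z :: complex
      proof
        assume a: "x < (cmod z)^2" show "\<not> cmod z \<le> sqrt x"
        proof
          assume "cmod z \<le> sqrt x"
          hence "(cmod z)^2 \<le> (sqrt x)^2" by (intro power_mono) auto
          thus False using a False by simp
        qed
      next
        assume "\<not> cmod z \<le> sqrt x" hence "sqrt x < cmod z" by simp
        hence "(sqrt x)^2 < (cmod z)^2" using False by (intro power_strict_mono) auto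
        thus "x < (cmod z)^2" using False by simp
      qed
      have eq: "{z. x < (cmod z)^2} \<inter> unit_disk = unit_disk - cball 0 (sqrt x)"
        unfolding set_eq_iff by (simp add: iff) blast
      have "emeasure lborel (unit_disk - cball 0 (sqrt x)) =
            emeasure lborel (unit_disk) - emeasure lborel (cball (0::complex) (sqrt x))"
      proof (rule emeasure_Diff)
        show "emeasure lborel (cball (0::complex) (sqrt x)) \<noteq> \<infinity>" using False by (simp add: emeasure_cdisk)
        show "cball 0 (sqrt x) \<subseteq> unit_disk"
        proof
          fix z :: complex assume "z \<in> cball 0 (sqrt x)"
          hence "cmod z \<le> sqrt x" by simp
          from order.strict_trans1[OF this sq] show "z \<in> unit_disk" by simp
        qed
      qed auto
      also have "\<dots> = ennreal (pi * (1 - x))"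
        using False True by (simp add: emeasure_disk emeasure_cdisk ennreal_minus[symmetric] algebra_simps)
      finally show ?thesis using True False by (simp add: eM eq)
    next
      case False2: False
      hence "{z. x < (cmod z)^2} \<inter> unit_disk = {}"
      proof -
        { fix z :: complex assume "cmod z < 1" "x < (cmod z)^2"
          hence "(cmod z)^2 < 1" by (simp add: power_less_one_iff)
          with False2 \<open>x < (cmod z)^2\<close> have False by simp }
        thus ?thesis by auto
      qed
      thus ?thesis using False False2 by (simp add: eM)
    qed
  qed
  show "emeasure ?M {x<..} < \<infinity>" for x by (simp add: eM2)
  show "emeasure ?M {x<..} = emeasure ?N {x<..}" for x
  proof -
    have "emeasure ?N {x<..} = (\<integral>\<^sup>+t. ennreal pi * indicator ({0..<1} \<inter> {x<..}) t \<partial>lborel)"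
      by (subst emeasure_density) (auto intro!: nn_integral_cong simp: indicator_def)
    also have "\<dots> = ennreal pi * emeasure lborel ({0..<1} \<inter> {x<..})"
      by (subst nn_integral_cmult_indicator) auto
    also have "\<dots> = ennreal (if x < 0 then pi else if x < 1 then pi * (1 - x) else 0)"
    proof -
      consider "x < 0" | "0 \<le> x" "x < 1" | "1 \<le> x" by linarith
      thus ?thesis
      proof cases
        case 1
        hence "{0..<1} \<inter> {x<..} = {0..<(1::real)}" by auto
        thus ?thesis using 1 by simp
      next
        case 2
        hence "{0..<1} \<inter> {x<..} = {x<..<(1::real)}" by auto
        thus ?thesis using 2 by (simp add: ennreal_mult[symmetric])
      next
        case 3
        hence "{0..<1} \<inter> {x<..} = ({}::real set)" by auto
        thus ?thesis using 3 by simp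
      qed
    qed
    finally show ?thesis by (simp add: eM2)
  qed
qed

lemma radial_nn:
  fixes h :: "real \<Rightarrow> ennreal" assumes h[measurable]: "h \<in> borel_measurable borel"
  shows "(\<integral>\<^sup>+z. h ((cmod z)^2) * indicator unit_disk z \<partial>lborel) =
         ennreal pi * (\<integral>\<^sup>+t. h t * indicator {0..<1} t \<partial>lborel)"
proof -
  have qm: "(\<lambda>z::complex. (cmod z)^2) \<in> restrict_space lborel unit_disk \<rightarrow>\<^sub>M borel"
    by (rule measurable_restrict_space1) measurable
  have "(\<integral>\<^sup>+z. h ((cmod z)^2) * indicator unit_disk z \<partial>lborel) =
        (\<integral>\<^sup>+z. h ((cmod z)^2) \<partial>restrict_space lborel unit_disk)"
    by (subst nn_integral_restrict_space) auto
  also have "\<dots> = (\<integral>\<^sup>+t. h t \<partial>distr (restrict_space lborel unit_disk) borel (\<lambda>z. (cmod z)^2))"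
    by (rule nn_integral_distr[symmetric, OF qm]) simp
  also have "\<dots> = (\<integral>\<^sup>+t. h t \<partial>density lborel (\<lambda>t. ennreal pi * indicator {0..<1} t))"
    by (simp add: radial_distr)
  also have "\<dots> = (\<integral>\<^sup>+t. ennreal pi * (h t * indicator {0..<1} t) \<partial>lborel)"
    by (subst nn_integral_density) (auto intro!: nn_integral_cong simp: mult_ac)
  also have "\<dots> = ennreal pi * (\<integral>\<^sup>+t. h t * indicator {0..<1} t \<partial>lborel)"
    by (rule nn_integral_cmult) simp
  finally show ?thesis .
qed

lemma beta_nn:
  fixes k :: nat and \<alpha> :: real assumes a: "\<alpha> > -1"
  shows "(\<integral>\<^sup>+t. ennreal (t^k * (1 - t) powr \<alpha>) * indicator {0..<1} t \<partial>lborel) =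
         ennreal (Beta (real k + 1) (\<alpha> + 1))"
proof -
  have hi: "((\<lambda>t. t powr (real k + 1 - 1) * (1 - t) powr (\<alpha> + 1 - 1)) has_integral Beta (real k + 1) (\<alpha> + 1)) {0..1}"
    by (rule has_integral_Beta_real) (use a in auto)
  have "(\<integral>\<^sup>+t. ennreal (t powr (real k + 1 - 1) * (1 - t) powr (\<alpha> + 1 - 1)) * indicator {0..1} t \<partial>lborel)
        = ennreal (Beta (real k + 1) (\<alpha> + 1))"
    by (rule nn_integral_has_integral_lebesgue'[OF _ hi]) auto
  moreover have "(\<integral>\<^sup>+t. ennreal (t^k * (1 - t) powr \<alpha>) * indicator {0..<1} t \<partial>lborel) =
     (\<integral>\<^sup>+t. ennreal (t powr (real k + 1 - 1) * (1 - t) powr (\<alpha> + 1 - 1)) * indicator {0..1} t \<partial>lborel)"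
  proof (rule nn_integral_cong_AE)
    have "AE t in lborel. t \<noteq> (0::real)" by (rule AE_lborel_singleton)
    moreover have "AE t in lborel. t \<noteq> (1::real)" by (rule AE_lborel_singleton)
    ultimately show "AE t in lborel. ennreal (t^k * (1 - t) powr \<alpha>) * indicator {0..<1} t =
       ennreal (t powr (real k + 1 - 1) * (1 - t) powr (\<alpha> + 1 - 1)) * indicator {0..1} t"
      by eventually_elim (auto simp: indicator_def powr_realpow)
  qed
  ultimately show ?thesis by simp
qed

lemma disk_moment_nn:
  fixes k :: nat and \<alpha> :: real assumes a: "\<alpha> > -1"
  shows "(\<integral>\<^sup>+z. ennreal ((cmod z)^(2*k) * (1 - (cmod z)^2) powr \<alpha>) * indicator unit_disk z \<partial>lborel) =
         ennreal (pi * Beta (real k + 1) (\<alpha> + 1))"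
proof -
  have "(\<integral>\<^sup>+z. ennreal ((cmod z)^(2*k) * (1 - (cmod z)^2) powr \<alpha>) * indicator unit_disk z \<partial>lborel) =
        (\<integral>\<^sup>+z. (\<lambda>t. ennreal (t^k * (1 - t) powr \<alpha>)) ((cmod z)^2) * indicator unit_disk z \<partial>lborel)"
    by (simp add: power_mult)
  also have "\<dots> = ennreal pi * (\<integral>\<^sup>+t. ennreal (t^k * (1 - t) powr \<alpha>) * indicator {0..<1} t \<partial>lborel)"
    by (rule radial_nn) measurable
  also have "\<dots> = ennreal (pi * Beta (real k + 1) (\<alpha> + 1))"
    by (simp add: beta_nn[OF a] ennreal_mult')
  finally show ?thesis .
qed

lemma cis_pow_ne1:
  fixes j :: nat assumes "j > 0"
  shows "cis (pi / (2 * real j)) ^ j = \<i>" "Im (cis (pi / (2 * real j))) \<noteq> 0"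
proof -
  have eq: "real j * (pi / (2 * real j)) = pi / 2" using assms by (simp add: field_simps)
  have "cis (pi / (2 * real j)) ^ j = cis (real j * (pi / (2 * real j)))" by (rule Complex.DeMoivre)
  also have "\<dots> = cis (pi / 2)" by (simp only: eq)
  finally show "cis (pi / (2 * real j)) ^ j = \<i>" by simp
  have "0 < pi / (2 * real j)" using assms by simp
  moreover have "pi / (2 * real j) < pi" using assms pi_gt_zero
    by (simp add: divide_less_eq)
  ultimately have "sin (pi / (2 * real j)) > 0" by (intro sin_gt_zero)
  thus "Im (cis (pi / (2 * real j))) \<noteq> 0" by simp
qed

lemma orth:
  fixes n k :: nat and r :: real and \<psi> :: "real \<Rightarrow> real"
  assumes nk: "n \<noteq> k" and [measurable]: "\<psi> \<in> borel_measurable borel"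
  shows "integral\<^sup>L lborel (\<lambda>z. indicator (ball 0 r) z *\<^sub>R (z^n * cnj z ^ k * complex_of_real (\<psi> (cmod z)))) = 0"
proof -
  define G where "G = (\<lambda>z::complex. indicator (ball 0 r) z *\<^sub>R (z^n * cnj z ^ k * complex_of_real (\<psi> (cmod z))))"
  have [measurable]: "ball (0::complex) r \<in> sets borel" by simp
  have [measurable]: "(\<lambda>x::complex. x^n * cnj x ^ k) \<in> borel_measurable borel"
    by (intro borel_measurable_continuous_onI continuous_intros)
  have [measurable]: "(\<lambda>x::complex. complex_of_real (\<psi> (cmod x))) \<in> borel_measurable borel" by measurable
  have Gm[measurable]: "G \<in> borel_measurable borel" unfolding G_def by measurable
  obtain e :: complex where e1: "cmod e = 1" and e2: "Im e \<noteq> 0" and e3: "e^n * cnj e ^ k \<noteq> 1"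
  proof (cases "n > k")
    case True
    define j where "j = n - k"
    have j: "j > 0" using True by (simp add: j_def)
    let ?e = "cis (pi / (2 * real j))"
    have "?e^n * cnj ?e ^ k = ?e^j * (?e * cnj ?e)^k"
      using True by (simp add: j_def power_add[symmetric] power_mult_distrib)
    also have "?e * cnj ?e = 1" by (simp add: complex_mult_cnj cmod_def[symmetric] )
    finally have "?e^n * cnj ?e ^ k = \<i>" using cis_pow_ne1[OF j] by simp
    thus ?thesis using that[of ?e] cis_pow_ne1[OF j] by simp
  next
    case False
    hence nk': "n < k" using nk by simp
    define j where "j = k - n"
    have j: "j > 0" using nk' by (simp add: j_def)
    let ?e = "cis (pi / (2 * real j))"
    have "?e^n * cnj ?e ^ k = cnj ?e ^ j * (?e * cnj ?e)^n"
      using nk' by (simp add: j_def power_add[symmetric] power_mult_distrib)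
    also have "?e * cnj ?e = 1" by (simp add: complex_mult_cnj cmod_def[symmetric])
    also have "cnj ?e ^ j = cnj (?e ^ j)" by simp
    finally have "?e^n * cnj ?e ^ k = - \<i>" using cis_pow_ne1[OF j] by simp
    moreover have "- \<i> \<noteq> (1::complex)" by (simp add: complex_eq_iff)
    ultimately show ?thesis using that[of ?e] cis_pow_ne1[OF j] by simp
  qed
  have rot: "G (e * z) = (e^n * cnj e ^ k) * G z" for z
  proof -
    have "cmod (e * z) = cmod z" using e1 by (simp add: norm_mult)
    thus ?thesis unfolding G_def
      by (simp add: power_mult_distrib indicator_def mult_ac)
  qed
  have me: "(\<lambda>z. e * z) \<in> (borel :: complex measure) \<rightarrow>\<^sub>M borel" by measurable
  have "integral\<^sup>L lborel G = integral\<^sup>L (distr lborel borel (\<lambda>z. e * z)) G"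
    by (simp add: lborel_rotate[OF e1 e2])
  also have "\<dots> = integral\<^sup>L lborel (\<lambda>z. G (e * z))"
    by (rule integral_distr) (use me in auto)
  also have "\<dots> = (e^n * cnj e ^ k) * integral\<^sup>L lborel G"
    by (simp add: rot)
  finally have "(1 - e^n * cnj e ^ k) * integral\<^sup>L lborel G = 0" by (simp add: algebra_simps)
  thus ?thesis using e3 unfolding G_def by simp
qed

lemma meas_ind:
  fixes f :: "'a::euclidean_space \<Rightarrow> 'b::real_normed_vector"
  shows "A \<in> sets borel \<Longrightarrow> continuous_on A f \<Longrightarrow> (\<lambda>x. indicator A x *\<^sub>R f x) \<in> borel_measurable lborel"
  using borel_measurable_continuous_on_indicator[of A f] by simp

abbreviation wt :: "real \<Rightarrow> complex \<Rightarrow> real" where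
  "wt \<alpha> z \<equiv> (1 - (cmod z)\<^sup>2) powr \<alpha>"

lemma wt_cont: "continuous_on unit_disk (\<lambda>z. wt \<alpha> z)"
proof -
  have "continuous_on unit_disk (\<lambda>z::complex. 1 - (cmod z)\<^sup>2)" by (intro continuous_intros)
  moreover have "\<forall>z\<in>unit_disk. 1 - (cmod z)\<^sup>2 > 0"
    by (auto simp: power_less_one_iff abs_square_less_1)
  ultimately show ?thesis by (intro continuous_on_powr continuous_intros) auto
qed

lemma moment_int:
  fixes k :: nat assumes a: "\<alpha> > -1"
  shows "integrable lborel (\<lambda>z. indicator unit_disk z *\<^sub>R ((cmod z)^(2*k) * wt \<alpha> z))"
    and "integral\<^sup>L lborel (\<lambda>z. indicator unit_disk z *\<^sub>R ((cmod z)^(2*k) * wt \<alpha> z)) = pi * Beta (real k + 1) (\<alpha> + 1)"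
proof -
  have m: "(\<lambda>z. indicator unit_disk z *\<^sub>R ((cmod z)^(2*k) * wt \<alpha> z)) \<in> borel_measurable lborel"
    by (rule meas_ind) (auto intro!: continuous_intros wt_cont)
  have nn: "(\<integral>\<^sup>+z. ennreal (indicator unit_disk z *\<^sub>R ((cmod z)^(2*k) * wt \<alpha> z)) \<partial>lborel) =
            ennreal (pi * Beta (real k + 1) (\<alpha> + 1))"
    by (subst disk_moment_nn[OF a, symmetric]) (auto intro!: nn_integral_cong simp: indicator_def)
  have pos: "pi * Beta (real k + 1) (\<alpha> + 1) \<ge> 0"
    using a by (simp add: Beta_def)
  show "integrable lborel (\<lambda>z. indicator unit_disk z *\<^sub>R ((cmod z)^(2*k) * wt \<alpha> z))"
    by (rule integrableI_nn_integral_finite[OF m _ nn]) (auto intro!: AE_I2)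
  show "integral\<^sup>L lborel (\<lambda>z. indicator unit_disk z *\<^sub>R ((cmod z)^(2*k) * wt \<alpha> z)) = pi * Beta (real k + 1) (\<alpha> + 1)"
    by (subst integral_eq_nn_integral[OF m]) (use pos nn in \<open>auto intro!: AE_I2\<close>)
qed

lemma wt_int: "\<alpha> > -1 \<Longrightarrow> integrable lborel (\<lambda>z. indicator unit_disk z *\<^sub>R wt \<alpha> z)"
  using moment_int(1)[of \<alpha> 0] by simp

lemma integral_series:
  fixes F :: "nat \<Rightarrow> 'a \<Rightarrow> complex" and G :: "'a \<Rightarrow> real"
  assumes meas: "\<And>m. F m \<in> borel_measurable M"
    and G: "integrable M G" and G0: "\<And>x. x \<in> space M \<Longrightarrow> G x \<ge> 0"
    and bnd: "\<And>m x. x \<in> space M \<Longrightarrow> norm (F m x) \<le> b m * G x"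
    and b: "summable b" "\<And>m. b m \<ge> 0"
    and sm: "\<And>x. x \<in> space M \<Longrightarrow> (\<lambda>m. F m x) sums S x"
  shows "integrable M S" "(\<lambda>m. integral\<^sup>L M (F m)) sums integral\<^sup>L M S"
proof -
  define s where "s = (\<lambda>i x. \<Sum>m<i. F m x)"
  have smeas: "\<And>i. s i \<in> borel_measurable M" unfolding s_def using meas by measurable
  have lim: "\<And>x. x \<in> space M \<Longrightarrow> (\<lambda>i. s i x) \<longlonglongrightarrow> S x"
    using sm unfolding s_def sums_def by auto
  have Smeas: "S \<in> borel_measurable M"
    by (rule borel_measurable_LIMSEQ_metric[OF smeas lim])
  have wint: "integrable M (\<lambda>x. suminf b * G x)" using G by auto
  have bound: "norm (s i x) \<le> suminf b * G x" if "x \<in> space M" for i x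
  proof -
    have "norm (s i x) \<le> (\<Sum>m<i. norm (F m x))" unfolding s_def by (rule norm_sum)
    also have "\<dots> \<le> (\<Sum>m<i. b m * G x)" by (intro sum_mono bnd that)
    also have "\<dots> = (\<Sum>m<i. b m) * G x" by (simp add: sum_distrib_right)
    also have "\<dots> \<le> suminf b * G x"
      by (intro mult_right_mono sum_le_suminf b G0 that) auto
    finally show ?thesis .
  qed
  show "integrable M S"
    by (rule integrable_dominated_convergence[OF Smeas smeas wint])
       (auto intro!: AE_I2 lim bound)
  have "(\<lambda>i. integral\<^sup>L M (s i)) \<longlonglongrightarrow> integral\<^sup>L M S"
    by (rule integral_dominated_convergence[OF Smeas smeas wint])
       (auto intro!: AE_I2 lim bound)
  moreover have Fint: "integrable M (F m)" for m
    by (rule Bochner_Integration.integrable_bound[of _ "\<lambda>x. b m * G x"])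
       (use G meas in \<open>auto intro!: AE_I2 intro: order.trans[OF bnd abs_ge_self]\<close>)
  moreover have "integral\<^sup>L M (s i) = (\<Sum>m<i. integral\<^sup>L M (F m))" for i
    unfolding s_def by (subst Bochner_Integration.integral_sum) (use Fint in auto)
  ultimately show "(\<lambda>m. integral\<^sup>L M (F m)) sums integral\<^sup>L M S"
    unfolding sums_def by simp
qed

lemma wt_int_ball:
  assumes a: "\<alpha> > -1" and r: "r \<le> 1"
  shows "integrable lborel (\<lambda>z. indicator (ball 0 r) z *\<^sub>R ((cmod z)^(2*k) * wt \<alpha> z))"
proof (rule Bochner_Integration.integrable_bound[OF moment_int(1)[OF a, of k]])
  show "(\<lambda>z. indicator (ball 0 r) z *\<^sub>R ((cmod z)^(2*k) * wt \<alpha> z)) \<in> borel_measurable lborel"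
    by (rule meas_ind) (use r in \<open>auto intro!: continuous_intros continuous_on_subset[OF wt_cont]\<close>)
  have "ball 0 r \<subseteq> unit_disk" using r by auto
  thus "AE z in lborel. norm (indicator (ball 0 r) z *\<^sub>R ((cmod z)^(2*k) * wt \<alpha> z))
        \<le> norm (indicator unit_disk z *\<^sub>R ((cmod z)^(2*k) * wt \<alpha> z))"
    by (intro AE_I2) (auto simp: indicator_def)
qed

lemma moment:
  fixes g :: "complex \<Rightarrow> complex" and k :: nat
  assumes a: "\<alpha> > -1" and hol: "g holomorphic_on unit_disk"
    and gi: "integrable lborel (\<lambda>z. indicator unit_disk z *\<^sub>R (cmod (g z) * wt \<alpha> z))"
  shows "integral\<^sup>L lborel (\<lambda>z. indicator unit_disk z *\<^sub>R (g z * cnj z ^ k * complex_of_real (wt \<alpha> z)))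
         = (deriv^^k) g 0 / fact k * complex_of_real (pi * Beta (real k + 1) (\<alpha> + 1))"
proof -
  define a where "a = (\<lambda>n. (deriv^^n) g 0 / fact n)"
  define S where "S = (\<lambda>r. integral\<^sup>L lborel (\<lambda>z. indicator (ball 0 r) z *\<^sub>R (g z * cnj z ^ k * complex_of_real (wt \<alpha> z))))"
  define J where "J = (\<lambda>r. integral\<^sup>L lborel (\<lambda>z. indicator (ball 0 r) z *\<^sub>R complex_of_real ((cmod z)^(2*k) * wt \<alpha> z)))"
  have gc: "continuous_on unit_disk g" using hol by (rule holomorphic_on_imp_continuous_on)
  have ps: "(\<lambda>n. a n * z^n) sums g z" if "z \<in> unit_disk" for z
    using holomorphic_power_series[OF hol that] by (simp add: a_def)
  have SJ: "S r = a k * J r" if r0: "0 \<le> r" and r1: "r < 1" for r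
  proof -
    define F where "F = (\<lambda>n z. indicator (ball 0 r) z *\<^sub>R (a n * (z^n * cnj z ^ k * complex_of_real (wt \<alpha> z))))"
    have sub: "ball 0 r \<subseteq> unit_disk" using r1 by auto
    have measF: "F n \<in> borel_measurable lborel" for n
      unfolding F_def
      by (rule meas_ind) (auto intro!: continuous_intros continuous_on_subset[OF wt_cont sub])
    have Gi: "integrable lborel (\<lambda>z. indicator (ball 0 r) z *\<^sub>R ((cmod z)^(2*0) * wt \<alpha> z))"
      by (rule wt_int_ball) (use a r1 in auto)
    define x where "x = complex_of_real ((1 + r) / 2)"
    have x: "x \<in> unit_disk" unfolding x_def mem_ball dist_0_norm norm_of_real using r0 r1 by simp
    have "summable (\<lambda>n. a n * x^n)" using ps[OF x] by (rule sums_summable)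
    moreover have "norm (complex_of_real r) < norm x"
      unfolding x_def norm_of_real using r0 r1 by simp
    ultimately have sb: "summable (\<lambda>n. norm (a n * (complex_of_real r)^n))"
      by (rule powser_insidea)
    have bnd: "norm (F n z) \<le> norm (a n * (complex_of_real r)^n) * (indicator (ball 0 r) z *\<^sub>R ((cmod z)^(2*0) * wt \<alpha> z))" for n z
    proof (cases "z \<in> ball 0 r")
      case True
      hence z: "cmod z < r" by simp
      have "norm (F n z) = norm (a n) * (cmod z ^ n * cmod z ^ k) * wt \<alpha> z"
        using True by (simp add: F_def norm_mult norm_power)
      also have "\<dots> \<le> norm (a n) * (r ^ n * 1) * wt \<alpha> z"
      proof (intro mult_right_mono mult_left_mono)
        show "cmod z ^ n * cmod z ^ k \<le> r ^ n * 1"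
        proof (rule mult_mono)
          show "cmod z ^ n \<le> r ^ n" using z by (intro power_mono) auto
          show "cmod z ^ k \<le> 1" using z r1 by (intro power_le_one) auto
        qed (use r0 in auto)
      qed auto
      finally show ?thesis using True r0 by (simp add: norm_mult norm_power)
    qed (simp add: F_def)
    have smF: "(\<lambda>n. F n z) sums (indicator (ball 0 r) z *\<^sub>R (g z * cnj z ^ k * complex_of_real (wt \<alpha> z)))" for z
    proof (cases "z \<in> ball 0 r")
      case True
      hence "z \<in> unit_disk" using sub by auto
      from sums_mult2[OF ps[OF this], of "cnj z ^ k * complex_of_real (wt \<alpha> z)"]
      show ?thesis using True by (simp add: F_def mult_ac)
    qed (simp add: F_def)
    from integral_series(2)[OF measF Gi _ bnd sb _ smF]
    have ser: "(\<lambda>n. integral\<^sup>L lborel (F n)) sums S r" by (simp add: S_def)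
    have "integral\<^sup>L lborel (F n) = (if n = k then a k * J r else 0)" for n
    proof -
      have "integral\<^sup>L lborel (F n) = a n * integral\<^sup>L lborel (\<lambda>z. indicator (ball 0 r) z *\<^sub>R
                 (z^n * cnj z ^ k * complex_of_real ((\<lambda>t. (1 - t\<^sup>2) powr \<alpha>) (cmod z))))"
        unfolding F_def by (simp add: scaleR_conv_of_real mult_ac)
      also have "\<dots> = (if n = k then a k * J r else 0)"
      proof (cases "n = k")
        case True
        have "z^k * cnj z ^ k = complex_of_real ((cmod z)^(2*k))" for z
        proof -
          have "z^k * cnj z ^ k = (z * cnj z) ^ k" by (simp add: power_mult_distrib)
          also have "z * cnj z = complex_of_real ((cmod z)^2)" by (rule complex_norm_square[symmetric])
          finally show ?thesis by (simp add: power_mult)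
        qed
        thus ?thesis using True unfolding J_def by (simp add: mult_ac)
      next
        case False
        have "integral\<^sup>L lborel (\<lambda>z. indicator (ball 0 r) z *\<^sub>R
                 (z^n * cnj z ^ k * complex_of_real ((\<lambda>t. (1 - t\<^sup>2) powr \<alpha>) (cmod z)))) = 0"
          by (rule orth[OF False]) measurable
        thus ?thesis using False by simp
      qed
      finally show ?thesis .
    qed
    with ser have "(\<lambda>n. if n = k then a k * J r else 0) sums S r" by simp
    moreover have "(\<lambda>n. if n = k then a k * J r else 0) sums (a k * J r)"
      using sums_single[of k "\<lambda>_. a k * J r"] by simp
    ultimately show ?thesis by (rule sums_unique2)
  qed
  define rr where "rr = (\<lambda>j::nat. 1 + - inverse (real (Suc j)))"
  have rr0: "0 \<le> rr j" "rr j < 1" for j by (auto simp: rr_def field_simps)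
  have rrlim: "rr \<longlonglongrightarrow> 1" unfolding rr_def by (rule LIMSEQ_inverse_real_of_nat_add_minus)
  have ind_lim: "(\<lambda>j. indicator (ball 0 (rr j)) z :: real) \<longlonglongrightarrow> indicator unit_disk z" for z :: complex
  proof (cases "z \<in> unit_disk")
    case True
    hence "cmod z < 1" by simp
    from order_tendstoD(1)[OF rrlim this] have "eventually (\<lambda>j. cmod z < rr j) sequentially" .
    hence "eventually (\<lambda>j. indicator (ball 0 (rr j)) z = (indicator unit_disk z :: real)) sequentially"
      by eventually_elim (use True in simp)
    thus ?thesis by (rule tendsto_eventually)
  next
    case False
    hence "indicator (ball 0 (rr j)) z = (0::real)" for j using rr0[of j] by (auto simp: indicator_def)
    thus ?thesis using False by simp
  qed
  define I where "I = integral\<^sup>L lborel (\<lambda>z. indicator unit_disk z *\<^sub>R (g z * cnj z ^ k * complex_of_real (wt \<alpha> z)))"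
  define J1 where "J1 = integral\<^sup>L lborel (\<lambda>z. indicator unit_disk z *\<^sub>R complex_of_real ((cmod z)^(2*k) * wt \<alpha> z))"
  have "(\<lambda>j. S (rr j)) \<longlonglongrightarrow> I"
    unfolding S_def I_def
  proof (rule integral_dominated_convergence[OF _ _ gi])
    show "(\<lambda>z. indicator unit_disk z *\<^sub>R (g z * cnj z ^ k * complex_of_real (wt \<alpha> z))) \<in> borel_measurable lborel"
      by (rule meas_ind) (auto intro!: continuous_intros wt_cont gc)
    show "(\<lambda>z. indicator (ball 0 (rr j)) z *\<^sub>R (g z * cnj z ^ k * complex_of_real (wt \<alpha> z))) \<in> borel_measurable lborel" for j
      using rr0[of j]
      by (intro meas_ind) (auto intro!: continuous_intros continuous_on_subset[OF wt_cont] continuous_on_subset[OF gc])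
    show "AE z in lborel. (\<lambda>j. indicator (ball 0 (rr j)) z *\<^sub>R (g z * cnj z ^ k * complex_of_real (wt \<alpha> z)))
        \<longlonglongrightarrow> indicator unit_disk z *\<^sub>R (g z * cnj z ^ k * complex_of_real (wt \<alpha> z))"
      by (intro AE_I2 tendsto_scaleR ind_lim tendsto_const)
    show "AE z in lborel. norm (indicator (ball 0 (rr j)) z *\<^sub>R (g z * cnj z ^ k * complex_of_real (wt \<alpha> z)))
        \<le> indicator unit_disk z *\<^sub>R (cmod (g z) * wt \<alpha> z)" for j
    proof (intro AE_I2)
      fix z :: complex
      show "norm (indicator (ball 0 (rr j)) z *\<^sub>R (g z * cnj z ^ k * complex_of_real (wt \<alpha> z)))
        \<le> indicator unit_disk z *\<^sub>R (cmod (g z) * wt \<alpha> z)"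
      proof (cases "z \<in> ball 0 (rr j)")
        case True
        hence z: "cmod z < 1" using rr0[of j] by simp
        have "cmod z ^ k \<le> 1" using z by (intro power_le_one) auto
        hence "cmod (g z) * cmod z ^ k * wt \<alpha> z \<le> cmod (g z) * 1 * wt \<alpha> z"
          by (intro mult_right_mono mult_left_mono) auto
        thus ?thesis using True z by (simp add: norm_mult norm_power)
      qed (auto simp: indicator_def)
    qed
  qed
  moreover have "(\<lambda>j. J (rr j)) \<longlonglongrightarrow> J1"
    unfolding J_def J1_def
  proof (rule integral_dominated_convergence[OF _ _ moment_int(1)[OF a, of k]])
    show "(\<lambda>z. indicator unit_disk z *\<^sub>R complex_of_real ((cmod z)^(2*k) * wt \<alpha> z)) \<in> borel_measurable lborel"
      by (rule meas_ind) (auto intro!: continuous_intros wt_cont)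
    show "(\<lambda>z. indicator (ball 0 (rr j)) z *\<^sub>R complex_of_real ((cmod z)^(2*k) * wt \<alpha> z)) \<in> borel_measurable lborel" for j
      using rr0[of j]
      by (intro meas_ind) (auto intro!: continuous_intros continuous_on_subset[OF wt_cont])
    show "AE z in lborel. (\<lambda>j. indicator (ball 0 (rr j)) z *\<^sub>R complex_of_real ((cmod z)^(2*k) * wt \<alpha> z))
        \<longlonglongrightarrow> indicator unit_disk z *\<^sub>R complex_of_real ((cmod z)^(2*k) * wt \<alpha> z)"
      by (intro AE_I2 tendsto_scaleR ind_lim tendsto_const)
    show "AE z in lborel. norm (indicator (ball 0 (rr j)) z *\<^sub>R complex_of_real ((cmod z)^(2*k) * wt \<alpha> z))
        \<le> indicator unit_disk z *\<^sub>R ((cmod z)^(2*k) * wt \<alpha> z)" for j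
      using rr0[of j] by (intro AE_I2) (auto simp: indicator_def norm_mult norm_power)
  qed
  hence "(\<lambda>j. a k * J (rr j)) \<longlonglongrightarrow> a k * J1" by (intro tendsto_mult tendsto_const)
  hence "(\<lambda>j. S (rr j)) \<longlonglongrightarrow> a k * J1" using SJ rr0 by simp
  ultimately have "I = a k * J1" by (rule LIMSEQ_unique)
  moreover have "J1 = complex_of_real (pi * Beta (real k + 1) (\<alpha> + 1))"
  proof -
    have "J1 = integral\<^sup>L lborel (\<lambda>z. complex_of_real (indicator unit_disk z *\<^sub>R ((cmod z)^(2*k) * wt \<alpha> z)))"
      unfolding J1_def by (intro Bochner_Integration.integral_cong) (auto simp: indicator_def)
    also have "\<dots> = complex_of_real (integral\<^sup>L lborel (\<lambda>z. indicator unit_disk z *\<^sub>R ((cmod z)^(2*k) * wt \<alpha> z)))"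
      by (rule integral_complex_of_real)
    finally show ?thesis using moment_int(2)[OF a, of k] by simp
  qed
  ultimately show ?thesis by (simp add: I_def a_def)
qed

lemma coef_id:
  fixes \<alpha> :: real and m :: nat assumes a: "\<alpha> > -1"
  shows "(\<alpha> + 1) * ((\<alpha> + 2) * (pochhammer (\<alpha> + 3) m / fact m)) * Beta (real (Suc m) + 1) (\<alpha> + 1) / fact (Suc m)
         = 1 / fact m"
proof -
  have n1: "\<alpha> + 1 \<notin> \<int>\<^sub>\<le>\<^sub>0" "\<alpha> + 2 \<notin> \<int>\<^sub>\<le>\<^sub>0" "\<alpha> + 3 \<notin> \<int>\<^sub>\<le>\<^sub>0" using a by auto
  have G3: "Gamma (\<alpha> + 3) = (\<alpha> + 2) * ((\<alpha> + 1) * Gamma (\<alpha> + 1))"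
  proof -
    have "Gamma (\<alpha> + 3) = Gamma ((\<alpha> + 2) + 1)" by (simp add: add.assoc)
    also have "\<dots> = (\<alpha> + 2) * Gamma (\<alpha> + 2)" by (rule Gamma_plus1[OF n1(2)])
    also have "Gamma (\<alpha> + 2) = Gamma ((\<alpha> + 1) + 1)" by (simp add: add.assoc)
    also have "\<dots> = (\<alpha> + 1) * Gamma (\<alpha> + 1)" by (rule Gamma_plus1[OF n1(1)])
    finally show ?thesis .
  qed
  have P: "pochhammer (\<alpha> + 3) m = Gamma (\<alpha> + 3 + real m) / Gamma (\<alpha> + 3)"
    using pochhammer_Gamma[OF n1(3)] by simp
  have Gm: "Gamma (real (Suc m) + 1) = fact (Suc m)"
    using Gamma_fact[of "Suc m", where 'a=real] by (simp add: add.commute)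
  have B: "Beta (real (Suc m) + 1) (\<alpha> + 1) = fact (Suc m) * Gamma (\<alpha> + 1) / Gamma (\<alpha> + 3 + real m)"
    unfolding Beta_def Gm by (simp add: algebra_simps)
  have pos: "Gamma (\<alpha> + 1) > 0" "Gamma (\<alpha> + 3 + real m) > 0" using a by auto
  have aux: "A * (B * ((GM / (B * (A * G1))) / F)) * (F1 * G1 / GM) / F1 = 1 / F"
    if "A > 0" "B > 0" "G1 > 0" "GM > 0" "F > 0" "F1 > 0" for A B G1 GM F F1 :: real
    using that by (simp add: field_simps)
  show ?thesis unfolding P B G3
    by (rule aux) (use a pos in auto)
qed

lemma binom_series:
  fixes u :: complex and s :: real assumes u: "norm u < 1"
  shows "(\<lambda>m. complex_of_real (pochhammer s m / fact m) * u^m) sums inverse ((1 - u) powr complex_of_real s)"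
proof -
  have "norm (-u) < 1" using u by simp
  from gen_binomial_complex[OF this, of "- complex_of_real s"]
  have "(\<lambda>n. (- complex_of_real s gchoose n) * (- u) ^ n) sums (1 + - u) powr (- complex_of_real s)" .
  moreover have "(- complex_of_real s gchoose n) * (- u) ^ n = complex_of_real (pochhammer s n / fact n) * u^n" for n
  proof -
    have "(- complex_of_real s gchoose n) * (- u) ^ n = ((-1)^n * (-1)^n) * (pochhammer (complex_of_real s) n / fact n) * u^n"
      by (simp add: gbinomial_pochhammer power_minus[of u] mult_ac)
    also have "(-1)^n * (-1)^n = (1::complex)" by (simp flip: power_mult_distrib)
    finally show ?thesis by (simp add: pochhammer_of_real)
  qed
  ultimately show ?thesis by (simp add: powr_minus)
qed

lemma binom_summable:
  fixes t s :: real assumes "0 \<le> t" "t < 1"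
  shows "summable (\<lambda>m. pochhammer s m / fact m * t^m)"
proof -
  have "norm (complex_of_real t) < 1" using assms by simp
  from sums_summable[OF binom_series[OF this, of s]]
  have "summable (\<lambda>m. complex_of_real (pochhammer s m / fact m * t^m))" by simp
  thus ?thesis by (simp only: summable_complex_of_real)
qed

lemma K1_series:
  fixes \<alpha> :: real and w z :: complex
  assumes "norm (cnj w * z) < 1"
  shows "(\<lambda>m. complex_of_real ((\<alpha> + 2) * (pochhammer (\<alpha> + 3) m / fact m)) * w^m * cnj z ^ Suc m)
           sums cnj (K1 \<alpha> w z)"
proof -
  have "(\<lambda>m. complex_of_real (\<alpha> + 2) * z * (complex_of_real (pochhammer (\<alpha> + 3) m / fact m) * (cnj w * z)^m))
         sums (complex_of_real (\<alpha> + 2) * z * inverse ((1 - cnj w * z) powr complex_of_real (\<alpha> + 3)))"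
    by (rule sums_mult[OF binom_series[OF assms]])
  hence "(\<lambda>m. cnj (complex_of_real (\<alpha> + 2) * z * (complex_of_real (pochhammer (\<alpha> + 3) m / fact m) * (cnj w * z)^m)))
         sums cnj (K1 \<alpha> w z)"
    unfolding sums_cnj K1_def by (simp add: divide_inverse)
  thus ?thesis by (simp add: mult_ac power_mult_distrib)
qed

lemma RK:
  fixes g :: "complex \<Rightarrow> complex"
  assumes a: "\<alpha> > -1" and hol: "g holomorphic_on unit_disk"
    and gi: "integrable lborel (\<lambda>z. indicator unit_disk z *\<^sub>R (cmod (g z) * wt \<alpha> z))"
    and w: "w \<in> unit_disk"
  shows "complex_of_real ((\<alpha> + 1) / pi) *
           integral\<^sup>L lborel (\<lambda>z. indicator unit_disk z *\<^sub>R (g z * cnj (K1 \<alpha> w z) * complex_of_real (wt \<alpha> z)))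
         = deriv g w"
proof -
  define c where "c = (\<lambda>m. (\<alpha> + 2) * (pochhammer (\<alpha> + 3) m / fact m))"
  have c0: "c m \<ge> 0" for m
  proof -
    have "pochhammer (\<alpha> + 3) m \<ge> 0" using a by (intro pochhammer_nonneg) auto
    thus ?thesis unfolding c_def using a by simp
  qed
  have gc: "continuous_on unit_disk g" using hol by (rule holomorphic_on_imp_continuous_on)
  have wn: "cmod w < 1" using w by simp
  define F where "F = (\<lambda>m z. indicator unit_disk z *\<^sub>R (g z * (complex_of_real (c m) * w^m * cnj z ^ Suc m) * complex_of_real (wt \<alpha> z)))"
  have measF: "F m \<in> borel_measurable lborel" for m
    unfolding F_def by (rule meas_ind) (auto intro!: continuous_intros wt_cont gc)
  have sb: "summable (\<lambda>m. c m * cmod w ^ m)"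
    unfolding c_def using summable_mult[OF binom_summable[of "cmod w" "\<alpha> + 3"], of "\<alpha> + 2"] wn
    by (simp add: mult_ac)
  have bnd: "norm (F m z) \<le> c m * cmod w ^ m * (indicator unit_disk z *\<^sub>R (cmod (g z) * wt \<alpha> z))" for m z
  proof (cases "z \<in> unit_disk")
    case True
    hence z: "cmod z < 1" by simp
    have "norm (F m z) = c m * cmod w ^ m * (cmod (g z) * cmod z ^ Suc m * wt \<alpha> z)"
      using True c0[of m] by (simp add: F_def norm_mult norm_power mult_ac)
    also have "\<dots> \<le> c m * cmod w ^ m * (cmod (g z) * 1 * wt \<alpha> z)"
      using z c0[of m] by (intro mult_left_mono mult_right_mono power_le_one) auto
    finally show ?thesis using True by simp
  qed (simp add: F_def)
  have smF: "(\<lambda>m. F m z) sums (indicator unit_disk z *\<^sub>R (g z * cnj (K1 \<alpha> w z) * complex_of_real (wt \<alpha> z)))" for z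
  proof (cases "z \<in> unit_disk")
    case True
    have "norm (cnj w * z) < 1"
      using True wn by (simp add: norm_mult) (metis mult_strict_mono' norm_ge_zero mult_1_left)
    from K1_series[OF this, of \<alpha>]
    have "(\<lambda>m. complex_of_real (c m) * w^m * cnj z ^ Suc m) sums cnj (K1 \<alpha> w z)" by (simp add: c_def)
    from sums_mult2[OF sums_mult[OF this, of "g z"], of "complex_of_real (wt \<alpha> z)"]
    show ?thesis using True by (simp add: F_def)
  qed (simp add: F_def)
  from integral_series(2)[OF measF gi _ bnd sb _ smF] c0
  have ser: "(\<lambda>m. integral\<^sup>L lborel (F m)) sums
      integral\<^sup>L lborel (\<lambda>z. indicator unit_disk z *\<^sub>R (g z * cnj (K1 \<alpha> w z) * complex_of_real (wt \<alpha> z)))"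
    by simp
  have IF: "integral\<^sup>L lborel (F m) = complex_of_real (c m) * w^m *
       ((deriv^^(Suc m)) g 0 / fact (Suc m) * complex_of_real (pi * Beta (real (Suc m) + 1) (\<alpha> + 1)))" for m
  proof -
    have "integral\<^sup>L lborel (F m) = complex_of_real (c m) * w^m *
        integral\<^sup>L lborel (\<lambda>z. indicator unit_disk z *\<^sub>R (g z * cnj z ^ Suc m * complex_of_real (wt \<alpha> z)))"
    proof -
      have "F m = (\<lambda>z. (complex_of_real (c m) * w^m) * (indicator unit_disk z *\<^sub>R (g z * cnj z ^ Suc m * complex_of_real (wt \<alpha> z))))"
        by (auto simp: F_def fun_eq_iff indicator_def)
      thus ?thesis by (simp only: integral_mult_right_zero)
    qed
    also have "\<dots> = complex_of_real (c m) * w^m *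
       ((deriv^^(Suc m)) g 0 / fact (Suc m) * complex_of_real (pi * Beta (real (Suc m) + 1) (\<alpha> + 1)))"
      by (subst moment[OF a hol gi]) simp
    finally show ?thesis .
  qed
  have pi_neq: "complex_of_real pi \<noteq> 0" by simp
  have aux: "complex_of_real x * (complex_of_real cc * W * (D / complex_of_real f * complex_of_real y)) =
             complex_of_real (x * cc * y / f) * D * W" if "f \<noteq> 0" for x cc y f :: real and W D :: complex
    using that by (simp add: field_simps)
  have coef: "complex_of_real ((\<alpha> + 1) / pi) * integral\<^sup>L lborel (F m) = (deriv^^(Suc m)) g 0 / fact m * w^m" for m
  proof -
    have "complex_of_real ((\<alpha> + 1) / pi) * integral\<^sup>L lborel (F m) =
          complex_of_real ((\<alpha> + 1) / pi * c m * (pi * Beta (real (Suc m) + 1) (\<alpha> + 1)) / fact (Suc m)) * (deriv^^(Suc m)) g 0 * w^m"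
      unfolding IF using aux[of "fact (Suc m)" "(\<alpha> + 1) / pi" "c m" w "(deriv^^(Suc m)) g 0" "pi * Beta (real (Suc m) + 1) (\<alpha> + 1)"]
      by (simp add: of_real_fact)
    also have "(\<alpha> + 1) / pi * c m * (pi * Beta (real (Suc m) + 1) (\<alpha> + 1)) / fact (Suc m) = 1 / fact m"
    proof -
      have aux2: "x / p * cc * (p * b) / f = x * cc * b / f" if "p \<noteq> 0" "f \<noteq> 0" for x p cc b f :: real
        using that by (simp add: field_simps)
      show ?thesis unfolding aux2[OF pi_neq_zero fact_nonzero] c_def by (rule coef_id[OF a])
    qed
    finally show ?thesis by (simp add: field_simps)
  qed
  have cf: "(\<lambda>m. complex_of_real ((\<alpha> + 1) / pi) * integral\<^sup>L lborel (F m)) = (\<lambda>m. (deriv^^(Suc m)) g 0 / fact m * w^m)"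
    by (rule ext, rule coef)
  from sums_mult[OF ser, of "complex_of_real ((\<alpha> + 1) / pi)"]
  have s1: "(\<lambda>m. (deriv^^(Suc m)) g 0 / fact m * w^m) sums
     (complex_of_real ((\<alpha> + 1) / pi) * integral\<^sup>L lborel (\<lambda>z. indicator unit_disk z *\<^sub>R (g z * cnj (K1 \<alpha> w z) * complex_of_real (wt \<alpha> z))))"
    unfolding cf .
  have hd: "deriv g holomorphic_on unit_disk" by (rule holomorphic_deriv[OF hol]) simp
  from holomorphic_power_series[OF hd w]
  have "(\<lambda>m. (deriv^^m) (deriv g) 0 / fact m * w^m) sums deriv g w" by simp
  moreover have "(deriv^^m) (deriv g) = (deriv^^(Suc m)) g" for m
    by (simp add: funpow_Suc_right del: funpow.simps)
  ultimately have "(\<lambda>m. (deriv^^(Suc m)) g 0 / fact m * w^m) sums deriv g w" by simp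
  with s1 show ?thesis by (rule sums_unique2)
qed

lemma powr_mult_Re_pos:
  fixes w z t :: complex
  assumes "Re w > 0" "Re z > 0"
  shows "(w * z) powr t = w powr t * z powr t"
proof -
  have w0: "w \<noteq> 0" and z0: "z \<noteq> 0" using assms by auto
  have "\<bar>Im (Ln w)\<bar> < pi/2" "\<bar>Im (Ln z)\<bar> < pi/2"
    using Re_Ln_pos_lt_imp[OF assms(1)] Re_Ln_pos_lt_imp[OF assms(2)] by auto
  hence "Ln (w * z) = Ln w + Ln z" using Ln_times[OF w0 z0] by auto
  thus ?thesis using w0 z0 by (simp add: powr_def exp_add algebra_simps)
qed

lemma Re_one_minus_pos: "cmod v < 1 \<Longrightarrow> Re (1 - v) > 0"
  using abs_Re_le_cmod[of v] by auto

lemma lfm_identity: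
  fixes A B C D U Z :: complex
  assumes "D \<noteq> 0" "- B * U + D \<noteq> 0" "C * Z + D \<noteq> 0"
  shows "(1 - B / D * U) * (1 - (A * U - C) / (- B * U + D) * Z) =
         (1 - (- C / D) * Z) * (1 - (A * Z + B) / (C * Z + D) * U)"
proof -
  have x0: "- B * U + D \<noteq> 0" "C * Z + D \<noteq> 0" using assms by auto
  have h1: "1 - B / D * U = (- B * U + D) / D" using assms by (simp add: field_simps)
  have h2: "1 - (A * U - C) / (- B * U + D) * Z = (- B * U + D - (A * U - C) * Z) / (- B * U + D)"
    using x0 by (simp add: field_simps)
  have h3: "1 - (- C / D) * Z = (C * Z + D) / D" using assms by (simp add: field_simps)
  have h4: "1 - (A * Z + B) / (C * Z + D) * U = (C * Z + D - (A * Z + B) * U) / (C * Z + D)"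
    using x0 by (simp add: field_simps)
  have c: "(x / D) * (y / x) = y / D" if "x \<noteq> 0" for x y :: complex using that by simp
  show ?thesis unfolding h1 h2 h3 h4 c[OF x0(1)] c[OF x0(2)]
    by (simp add: algebra_simps)
qed

lemma kernel_identity:
  fixes a b c d z u :: complex and \<alpha> :: real
  defines "\<phi> \<equiv> lfm a b c d"
      and "\<sigma> \<equiv> lfm (cnj a) (- cnj c) (- cnj b) (cnj d)"
  assumes d: "d \<noteq> 0" and den1: "c * z + d \<noteq> 0" and den2: "- cnj b * u + cnj d \<noteq> 0"
    and h1: "cmod (cnj (\<phi> 0) * u) < 1" and h2: "cmod (cnj (\<sigma> u) * z) < 1"
    and h3: "cmod (cnj (\<sigma> 0) * z) < 1" and h4: "cmod (cnj (\<phi> z) * u) < 1"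
  shows "K1 \<alpha> (\<phi> 0) u * cnj (K1 \<alpha> (\<sigma> u) z) = cnj (K1 \<alpha> (\<sigma> 0) z) * K1 \<alpha> (\<phi> z) u"
proof -
  define P where "P = (\<lambda>y::complex. y powr complex_of_real (\<alpha> + 3))"
  define A where "A = 1 - cnj (\<phi> 0) * u"
  define B where "B = 1 - cnj (\<sigma> u) * z"
  define C where "C = 1 - cnj (\<sigma> 0) * z"
  define E where "E = 1 - cnj (\<phi> z) * u"
  have rA: "Re A > 0" and rB: "Re B > 0" and rC: "Re C > 0" and rE: "Re E > 0"
    unfolding A_def B_def C_def E_def
    using Re_one_minus_pos[OF h1] Re_one_minus_pos[OF h2] Re_one_minus_pos[OF h3] Re_one_minus_pos[OF h4]
    by blast+
  have rcB: "Re (cnj B) > 0" and rcC: "Re (cnj C) > 0" using rB rC by auto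
  have cP: "cnj (P y) = P (cnj y)" if "Re y > 0" for y
    unfolding P_def using that by (subst cnj_powr) auto
  have K1a: "K1 \<alpha> (\<phi> 0) u = complex_of_real (\<alpha> + 2) * u / P A" by (simp only: K1_def P_def A_def)
  have "K1 \<alpha> (\<sigma> u) z = complex_of_real (\<alpha> + 2) * z / P B" by (simp only: K1_def P_def B_def)
  hence K1b: "cnj (K1 \<alpha> (\<sigma> u) z) = complex_of_real (\<alpha> + 2) * cnj z / P (cnj B)"
    by (simp only: complex_cnj_divide complex_cnj_mult complex_cnj_complex_of_real cP[OF rB])
  have "K1 \<alpha> (\<sigma> 0) z = complex_of_real (\<alpha> + 2) * z / P C" by (simp only: K1_def P_def C_def)
  hence K1c: "cnj (K1 \<alpha> (\<sigma> 0) z) = complex_of_real (\<alpha> + 2) * cnj z / P (cnj C)"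
    by (simp only: complex_cnj_divide complex_cnj_mult complex_cnj_complex_of_real cP[OF rC])
  have K1d: "K1 \<alpha> (\<phi> z) u = complex_of_real (\<alpha> + 2) * u / P E" by (simp only: K1_def P_def E_def)
  have alg: "A * cnj B = cnj C * E"
  proof -
    have e1: "cnj (\<phi> 0) = cnj b / cnj d" by (simp add: \<phi>_def lfm_def)
    have e2: "\<sigma> u = (cnj a * u - cnj c) / (- cnj b * u + cnj d)" by (simp add: \<sigma>_def lfm_def)
    have e3: "\<sigma> 0 = - cnj c / cnj d" by (simp add: \<sigma>_def lfm_def)
    have cB: "cnj B = 1 - \<sigma> u * cnj z" unfolding B_def by simp
    have cC: "cnj C = 1 - \<sigma> 0 * cnj z" unfolding C_def by simp
    have e4: "cnj (\<phi> z) = (cnj a * cnj z + cnj b) / (cnj c * cnj z + cnj d)" by (simp add: \<phi>_def lfm_def)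
    have d': "cnj d \<noteq> 0" using d by simp
    have den1': "cnj c * cnj z + cnj d \<noteq> 0" using den1 by (metis complex_cnj_add complex_cnj_mult complex_cnj_zero_iff)
    have "A * cnj B = (1 - cnj b / cnj d * u) * (1 - (cnj a * u - cnj c) / (- cnj b * u + cnj d) * cnj z)"
      unfolding A_def cB e1 e2 ..
    also have "\<dots> = (1 - (- cnj c / cnj d) * cnj z) * (1 - (cnj a * cnj z + cnj b) / (cnj c * cnj z + cnj d) * u)"
      by (rule lfm_identity[OF d' den2 den1'])
    also have "\<dots> = cnj C * E"
      unfolding cC E_def e4 e3 ..
    finally show ?thesis .
  qed
  have PP: "P A * P (cnj B) = P (cnj C) * P E"
    unfolding P_def
    by (simp add: powr_mult_Re_pos[OF rA rcB, symmetric] powr_mult_Re_pos[OF rcC rE, symmetric] alg)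
  show ?thesis unfolding K1a K1b K1c K1d
    by (simp add: PP mult_ac divide_simps)
qed

lemma geom_c_lt_d:
  fixes a b c d :: complex and s :: real
  assumes nondeg: "a * d - b * c \<noteq> 0"
      and selfmap: "\<forall>z\<in>unit_disk. c * z + d \<noteq> 0"
      and bnd: "\<forall>z\<in>unit_disk. cmod (lfm a b c d z) \<le> s"
  shows "cmod c < cmod d"
proof (rule ccontr)
  assume "\<not> cmod c < cmod d"
  hence cd: "cmod d \<le> cmod c" by simp
  have d0: "d \<noteq> 0" using selfmap by force
  hence c0: "c \<noteq> 0" using cd by auto
  define z0 where "z0 = - d / c"
  have z0n: "cmod z0 \<le> 1" using cd c0 by (simp add: z0_def norm_divide divide_le_eq)
  have cz0: "c * z0 + d = 0" using c0 by (simp add: z0_def)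
  show False
  proof (cases "cmod z0 < 1")
    case True thus False using selfmap cz0 by auto
  next
    case False
    hence z1: "cmod z0 = 1" using z0n by simp
    define N where "N = cmod (a * z0 + b)"
    have "a * z0 + b = - (a * d - b * c) / c" using c0 by (simp add: z0_def field_simps)
    hence N0: "N > 0" using nondeg c0 by (simp add: N_def)
    have s0: "s \<ge> 0" using bnd[rule_format, of 0] by (auto intro: order_trans[OF norm_ge_zero])
    define M where "M = cmod a + s * cmod d + 1"
    have "s * cmod d \<ge> 0" using s0 by simp
    hence M0: "M > 0" unfolding M_def by (smt (verit) norm_ge_zero)
    define e where "e = min (1/2) (N / (2 * M))"
    have e0: "e > 0" "e \<le> 1/2" using N0 M0 by (auto simp: e_def)
    define z where "z = complex_of_real (1 - e) * z0"
    have "cmod z = \<bar>1 - e\<bar> * 1" unfolding z_def norm_mult norm_of_real z1 ..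
    hence zD: "z \<in> unit_disk" using e0 by simp
    have cz0': "c * z0 = - d" using cz0 by (simp add: add_eq_0_iff)
    have "c * z + d = (1 - e) * (c * z0) + d" by (simp add: z_def algebra_simps)
    hence den: "c * z + d = d * e" unfolding cz0' by (simp add: algebra_simps)
    have num: "cmod (a * z + b) \<ge> N - cmod a * e"
    proof -
      have "a * z + b = (a * z0 + b) - a * e * z0" by (simp add: z_def algebra_simps)
      hence "N \<le> cmod (a * z + b) + cmod (a * e * z0)"
        unfolding N_def by (metis norm_triangle_sub add.commute diff_add_cancel norm_triangle_ineq)
      moreover have "cmod (a * e * z0) = cmod a * e" using z1 e0 by (simp add: norm_mult)
      ultimately show ?thesis by simp
    qed
    have "cmod (lfm a b c d z) \<le> s" using bnd zD by auto
    hence "cmod (a * z + b) \<le> s * (cmod d * e)"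
      using d0 e0 by (simp add: lfm_def den norm_divide norm_mult divide_le_eq mult_ac)
    with num have "N \<le> (cmod a + s * cmod d) * e" by (simp add: algebra_simps)
    also have "\<dots> \<le> (cmod a + s * cmod d) * (N / (2 * M))"
      using s0 by (intro mult_left_mono) (auto simp: e_def)
    also have "\<dots> < N"
    proof -
      have "(cmod a + s * cmod d) * (N / (2 * M)) = N * ((cmod a + s * cmod d) / (2 * M))" by simp
      also have "(cmod a + s * cmod d) / (2 * M) < 1" using M0 by (simp add: M_def field_simps)
      hence "N * ((cmod a + s * cmod d) / (2 * M)) < N * 1" using N0 by (intro mult_strict_left_mono) auto
      finally show ?thesis by simp
    qed
    finally show False by simp
  qed
qed

lemma geom:
  fixes a b c d :: complex
  defines "\<phi> \<equiv> lfm a b c d"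
      and "\<sigma> \<equiv> lfm (cnj a) (- cnj c) (- cnj b) (cnj d)"
  assumes nondeg: "a * d - b * c \<noteq> 0"
      and selfmap: "\<forall>z\<in>unit_disk. c * z + d \<noteq> 0 \<and> \<phi> z \<in> unit_disk"
      and supnorm: "(SUP z\<in>unit_disk. cmod (\<phi> z)) < 1"
  obtains s r where "0 \<le> s" "s < 1" "0 \<le> r" "r < 1" "d \<noteq> 0"
    "\<And>z. cmod z \<le> 1 \<Longrightarrow> c * z + d \<noteq> 0 \<and> cmod (\<phi> z) \<le> s"
    "\<And>u. cmod u \<le> 1 \<Longrightarrow> - cnj b * u + cnj d \<noteq> 0 \<and> cmod (\<sigma> u) \<le> r"
proof -
  define s where "s = (SUP z\<in>unit_disk. cmod (\<phi> z))"
  have bdd: "bdd_above ((\<lambda>z. cmod (\<phi> z)) ` unit_disk)"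
    using selfmap by (intro bdd_aboveI[of _ 1]) auto
  have sb: "cmod (\<phi> z) \<le> s" if "z \<in> unit_disk" for z
    unfolding s_def by (rule cSUP_upper[OF that bdd])
  have s0: "0 \<le> s" using sb[of 0] by (auto intro: order_trans[OF norm_ge_zero])
  have s1: "s < 1" using supnorm by (simp add: s_def)
  have d0: "d \<noteq> 0" using selfmap by force
  have cd: "cmod c < cmod d"
    by (rule geom_c_lt_d[OF nondeg]) (use selfmap sb in \<open>auto simp: \<phi>_def\<close>)
  have den: "c * z + d \<noteq> 0" if "cmod z \<le> 1" for z
  proof
    assume "c * z + d = 0"
    hence "cmod d = cmod c * cmod z" by (metis add_eq_0_iff norm_minus_cancel norm_mult)
    also have "\<dots> \<le> cmod c" using that by (simp add: mult_left_le)
    finally show False using cd by simp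
  qed
  have contphi: "continuous_on (cball 0 1) \<phi>"
    unfolding \<phi>_def lfm_def by (intro continuous_intros) (use den in auto)
  have "\<phi> ` closure unit_disk \<subseteq> cball 0 s"
    by (rule image_closure_subset) (use contphi sb in auto)
  hence phib: "cmod (\<phi> z) \<le> s" if "cmod z \<le> 1" for z
  proof -
    from that have "z \<in> closure unit_disk" by simp
    with \<open>\<phi> ` closure unit_disk \<subseteq> cball 0 s\<close> have "\<phi> z \<in> cball 0 s" by blast
    thus ?thesis by simp
  qed
  have bd: "cmod b < cmod d"
  proof -
    have "cmod (\<phi> 0) < 1" using selfmap by auto
    thus ?thesis using d0 by (simp add: \<phi>_def lfm_def norm_divide divide_less_eq)
  qed
  have den2: "- cnj b * u + cnj d \<noteq> 0" if "cmod u \<le> 1" for u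
  proof
    assume "- cnj b * u + cnj d = 0"
    hence "cmod d = cmod b * cmod u" by (metis add_eq_0_iff2 complex_mod_cnj norm_minus_cancel norm_mult)
    also have "\<dots> \<le> cmod b" using that by (simp add: mult_left_le)
    finally show False using bd by simp
  qed
  have sig1: "cmod (\<sigma> u) < 1" if u: "cmod u \<le> 1" for u
  proof (rule ccontr)
    assume "\<not> cmod (\<sigma> u) < 1"
    hence ge: "cmod (cnj d - cnj b * u) \<le> cmod (cnj a * u - cnj c)"
      using den2[OF u] by (simp add: \<sigma>_def lfm_def norm_divide divide_less_eq)
    define p where "p = cnj a * u - cnj c"
    have p0: "p \<noteq> 0"
    proof
      assume "p = 0"
      hence "cnj d - cnj b * u = 0" using ge by (simp add: p_def)
      thus False using den2[OF u] by simp
    qed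
    define x where "x = (d - b * cnj u) / cnj p"
    have xn: "cmod x \<le> 1"
    proof -
      have "cmod (d - b * cnj u) = cmod (cnj d - cnj b * u)"
        by (metis complex_cnj_diff complex_cnj_mult complex_cnj_cnj complex_mod_cnj)
      also have "\<dots> \<le> cmod p" using ge by (simp add: p_def)
      finally have "cmod (d - b * cnj u) \<le> cmod p" .
      moreover have "cmod x = cmod (d - b * cnj u) / cmod p"
        unfolding x_def norm_divide complex_mod_cnj ..
      ultimately show ?thesis using p0 by (simp add: divide_le_eq)
    qed
    have cp: "cnj p = a * cnj u - c" by (simp add: p_def)
    have cp0: "a * cnj u - c \<noteq> 0" using p0 cp by (metis complex_cnj_zero_iff)
    have cx: "c * x + d = cnj u * (a * d - b * c) / cnj p"
      using cp0 unfolding x_def cp by (simp add: field_simps)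
    have ax: "a * x + b = (a * d - b * c) / cnj p"
      using cp0 unfolding x_def cp by (simp add: field_simps)
    have u0: "u \<noteq> 0"
    proof
      assume "u = 0"
      hence "c * x + d = 0" using cx by simp
      thus False using den[OF xn] by simp
    qed
    have "\<phi> x = 1 / cnj u"
      using p0 u0 nondeg unfolding \<phi>_def lfm_def ax cx by (simp add: field_simps)
    hence "cmod (\<phi> x) = 1 / cmod u" by (simp add: norm_divide)
    also have "\<dots> \<ge> 1" using u u0 by simp
    finally have "1 \<le> s" using phib[OF xn] by simp
    thus False using s1 by simp
  qed
  have contsig: "continuous_on (cball 0 1) \<sigma>"
    unfolding \<sigma>_def lfm_def by (intro continuous_intros) (use den2 in auto)
  have "compact ((\<lambda>u. cmod (\<sigma> u)) ` cball 0 1)"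
    by (intro compact_continuous_image continuous_intros contsig) simp
  then obtain m where m: "m \<in> (\<lambda>u. cmod (\<sigma> u)) ` cball 0 1" "\<forall>y \<in> (\<lambda>u. cmod (\<sigma> u)) ` cball 0 1. y \<le> m"
    using compact_attains_sup[of "(\<lambda>u. cmod (\<sigma> u)) ` cball 0 1"] by auto
  have m1: "m < 1" using m(1) sig1 by auto
  have m0: "m \<ge> 0" using m(1) by auto
  show ?thesis
  proof (rule that[OF s0 s1 m0 m1 d0])
    show "c * z + d \<noteq> 0 \<and> cmod (\<phi> z) \<le> s" if "cmod z \<le> 1" for z using den[OF that] phib[OF that] by simp
    show "- cnj b * u + cnj d \<noteq> 0 \<and> cmod (\<sigma> u) \<le> m" if "cmod u \<le> 1" for u using den2[OF that] m(2) that by auto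
  qed
qed

lemma K1_hol:
  assumes v: "cmod v < 1"
  shows "K1 \<alpha> v holomorphic_on unit_disk"
proof -
  have re: "Re (1 - cnj v * z) > 0" if "z \<in> unit_disk" for z
  proof -
    have "cmod v * cmod z \<le> cmod v" using that by (simp add: mult_left_le)
    hence "cmod (cnj v * z) < 1" using v by (simp add: norm_mult)
    thus ?thesis by (rule Re_one_minus_pos)
  qed
  have "(\<lambda>z. complex_of_real (\<alpha> + 2) * z / (1 - cnj v * z) powr complex_of_real (\<alpha> + 3)) holomorphic_on unit_disk"
  proof (intro holomorphic_intros)
    fix z assume z: "z \<in> unit_disk"
    show "1 - cnj v * z \<notin> \<real>\<^sub>\<le>\<^sub>0" using re[OF z] by (auto simp: complex_nonpos_Reals_iff)
    have "1 - cnj v * z \<noteq> 0"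
    proof
      assume "1 - cnj v * z = 0"
      hence "Re (1 - cnj v * z) = 0" by (simp only: zero_complex.sel)
      with re[OF z] show False by simp
    qed
    thus "(1 - cnj v * z) powr complex_of_real (\<alpha> + 3) \<noteq> 0" by (simp add: powr_def)
  qed
  thus ?thesis by (simp add: K1_def[abs_def])
qed

lemma K1_bound:
  assumes a: "\<alpha> > -1" and v: "cmod v \<le> s" and s: "s < 1" and u: "cmod u \<le> 1"
  shows "cmod (K1 \<alpha> v u) \<le> (\<alpha> + 2) / (1 - s) powr (\<alpha> + 3)"
proof -
  have vu: "cmod (cnj v * u) \<le> s" using v u
    by (simp add: norm_mult) (metis mult_mono norm_ge_zero mult.right_neutral order_trans)
  have lo: "1 - s \<le> cmod (1 - cnj v * u)"
    using norm_triangle_ineq2[of 1 "cnj v * u"] vu by simp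
  have s1: "1 - s > 0" using s by simp
  have n: "cmod ((1 - cnj v * u) powr complex_of_real (\<alpha> + 3)) = cmod (1 - cnj v * u) powr (\<alpha> + 3)"
    by (subst norm_powr_real_powr') auto
  have "(1 - s) powr (\<alpha> + 3) \<le> cmod (1 - cnj v * u) powr (\<alpha> + 3)"
    using lo s1 a by (intro powr_mono2) auto
  moreover have pos: "(1 - s) powr (\<alpha> + 3) > 0" using s1 by simp
  moreover have c2: "cmod (complex_of_real (\<alpha> + 2)) = \<alpha> + 2" using a by simp
  ultimately have "cmod (K1 \<alpha> v u) \<le> (\<alpha> + 2) * cmod u / (1 - s) powr (\<alpha> + 3)"
    unfolding K1_def norm_divide norm_mult n c2 using a
    by (intro divide_left_mono mult_nonneg_nonneg mult_pos_pos) auto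
  also have "\<dots> \<le> (\<alpha> + 2) * 1 / (1 - s) powr (\<alpha> + 3)"
    using u a pos by (intro divide_right_mono mult_left_mono) auto
  finally show ?thesis by simp
qed

definition IP :: "real \<Rightarrow> (complex \<Rightarrow> complex) \<Rightarrow> complex" where
  "IP \<alpha> F = integral\<^sup>L lborel (\<lambda>z. indicator unit_disk z *\<^sub>R (F z * complex_of_real (wt \<alpha> z)))"

lemma IP_cmult: "IP \<alpha> (\<lambda>z. k * F z) = k * IP \<alpha> F"
proof -
  have "(\<lambda>z. indicator unit_disk z *\<^sub>R (k * F z * complex_of_real (wt \<alpha> z))) =
        (\<lambda>z. k * (indicator unit_disk z *\<^sub>R (F z * complex_of_real (wt \<alpha> z))))"
    by (auto simp: fun_eq_iff indicator_def)
  thus ?thesis unfolding IP_def by (simp only: integral_mult_right_zero)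
qed

lemma IP_cnj: "cnj (IP \<alpha> F) = IP \<alpha> (\<lambda>z. cnj (F z))"
proof -
  have "(\<lambda>z. indicator unit_disk z *\<^sub>R (cnj (F z) * complex_of_real (wt \<alpha> z))) =
        (\<lambda>z. cnj (indicator unit_disk z *\<^sub>R (F z * complex_of_real (wt \<alpha> z))))"
    by (auto simp: fun_eq_iff indicator_def)
  thus ?thesis unfolding IP_def by (simp only: Bochner_Integration.integral_cnj)
qed

lemma IP_cong: "(\<And>z. z \<in> unit_disk \<Longrightarrow> F z = G z) \<Longrightarrow> IP \<alpha> F = IP \<alpha> G"
  unfolding IP_def by (intro Bochner_Integration.integral_cong) (auto simp: indicator_def)

lemma IP_series:
  fixes F :: "nat \<Rightarrow> complex \<Rightarrow> complex"
  assumes cont: "\<And>m. continuous_on unit_disk (F m)"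
    and H0: "\<And>z. z \<in> unit_disk \<Longrightarrow> H z \<ge> 0"
    and Hi: "integrable lborel (\<lambda>z. indicator unit_disk z *\<^sub>R (H z * wt \<alpha> z))"
    and bnd: "\<And>m z. z \<in> unit_disk \<Longrightarrow> norm (F m z) \<le> b m * H z"
    and b: "summable b" "\<And>m. b m \<ge> 0"
    and sm: "\<And>z. z \<in> unit_disk \<Longrightarrow> (\<lambda>m. F m z) sums S z"
  shows "(\<lambda>m. IP \<alpha> (F m)) sums IP \<alpha> S"
proof -
  have meas: "(\<lambda>z. indicator unit_disk z *\<^sub>R (F m z * complex_of_real (wt \<alpha> z))) \<in> borel_measurable lborel" for m
    by (rule meas_ind) (auto intro!: continuous_intros cont wt_cont)
  have bnd': "norm (indicator unit_disk z *\<^sub>R (F m z * complex_of_real (wt \<alpha> z))) \<le>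
               b m * (indicator unit_disk z *\<^sub>R (H z * wt \<alpha> z))" for m z
  proof (cases "z \<in> unit_disk")
    case True
    have "norm (F m z) * wt \<alpha> z \<le> b m * H z * wt \<alpha> z"
      by (intro mult_right_mono bnd True) auto
    thus ?thesis using True by (simp add: norm_mult mult_ac)
  qed simp
  have sm': "(\<lambda>m. indicator unit_disk z *\<^sub>R (F m z * complex_of_real (wt \<alpha> z))) sums
             (indicator unit_disk z *\<^sub>R (S z * complex_of_real (wt \<alpha> z)))" for z
  proof (cases "z \<in> unit_disk")
    case True
    from sums_mult2[OF sm[OF True], of "complex_of_real (wt \<alpha> z)"] show ?thesis using True by simp
  qed simp
  have G0: "indicator unit_disk z *\<^sub>R (H z * wt \<alpha> z) \<ge> 0" for z
    using H0[of z] by (cases "z \<in> unit_disk") auto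
  show ?thesis
    unfolding IP_def by (rule integral_series(2)[OF meas Hi G0 bnd' b sm'])
qed

lemma IP_bound:
  fixes F :: "complex \<Rightarrow> complex"
  assumes cont: "continuous_on unit_disk F"
    and Hi: "integrable lborel (\<lambda>z. indicator unit_disk z *\<^sub>R (H z * wt \<alpha> z))"
    and bnd: "\<And>z. z \<in> unit_disk \<Longrightarrow> norm (F z) \<le> H z"
  shows "norm (IP \<alpha> F) \<le> integral\<^sup>L lborel (\<lambda>z. indicator unit_disk z *\<^sub>R (H z * wt \<alpha> z))"
proof -
  have meas: "(\<lambda>z. indicator unit_disk z *\<^sub>R (F z * complex_of_real (wt \<alpha> z))) \<in> borel_measurable lborel"
    by (rule meas_ind) (auto intro!: continuous_intros cont wt_cont)
  have bnd': "norm (indicator unit_disk z *\<^sub>R (F z * complex_of_real (wt \<alpha> z))) \<le>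
               indicator unit_disk z *\<^sub>R (H z * wt \<alpha> z)" for z
  proof (cases "z \<in> unit_disk")
    case True
    have "norm (F z) * wt \<alpha> z \<le> H z * wt \<alpha> z"
      by (intro mult_right_mono bnd True) auto
    thus ?thesis using True by (simp add: norm_mult)
  qed simp
  have int: "integrable lborel (\<lambda>z. indicator unit_disk z *\<^sub>R (F z * complex_of_real (wt \<alpha> z)))"
    by (rule Bochner_Integration.integrable_bound[OF Hi meas])
       (use bnd' in \<open>intro AE_I2, metis abs_ge_self order_trans real_norm_def\<close>)
  show ?thesis unfolding IP_def
    by (rule Bochner_Integration.integral_norm_bound_integral[OF int Hi]) (use bnd' in auto)
qed

lemma bergman_inner_IP:
  "bergman_inner \<alpha> F G = complex_of_real ((\<alpha> + 1) / pi) * IP \<alpha> (\<lambda>z. F z * cnj (G z))"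
  unfolding bergman_inner_def IP_def set_lebesgue_integral_def ..

lemma bounded_in_bergman:
  assumes a: "\<alpha> > -1" and hol: "h holomorphic_on unit_disk" and M: "\<And>z. z \<in> unit_disk \<Longrightarrow> cmod (h z) \<le> M"
  shows "h \<in> bergman_space \<alpha>"
proof -
  have hc: "continuous_on unit_disk h" using hol by (rule holomorphic_on_imp_continuous_on)
  have M0: "M \<ge> 0" using M[of 0] by (auto intro: order_trans[OF norm_ge_zero])
  have "integrable lborel (\<lambda>z. indicator unit_disk z *\<^sub>R ((cmod (h z))\<^sup>2 * wt \<alpha> z))"
  proof (rule Bochner_Integration.integrable_bound[OF integrable_mult_right[OF wt_int[OF a], of "M^2"]])
    show "(\<lambda>z. indicator unit_disk z *\<^sub>R ((cmod (h z))\<^sup>2 * wt \<alpha> z)) \<in> borel_measurable lborel"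
      by (rule meas_ind) (auto intro!: continuous_intros hc wt_cont)
    show "AE z in lborel. norm (indicator unit_disk z *\<^sub>R ((cmod (h z))\<^sup>2 * wt \<alpha> z))
          \<le> norm (M^2 * (indicator unit_disk z *\<^sub>R wt \<alpha> z))"
    proof (intro AE_I2)
      fix z :: complex
      show "norm (indicator unit_disk z *\<^sub>R ((cmod (h z))\<^sup>2 * wt \<alpha> z)) \<le> norm (M^2 * (indicator unit_disk z *\<^sub>R wt \<alpha> z))"
      proof (cases "z \<in> unit_disk")
        case True
        have "(cmod (h z))\<^sup>2 \<le> M^2" using M[OF True] by (intro power_mono) auto
        hence "(cmod (h z))\<^sup>2 * wt \<alpha> z \<le> M^2 * wt \<alpha> z" by (intro mult_right_mono) auto
        thus ?thesis using True by simp
      qed simp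
    qed
  qed
  thus ?thesis unfolding bergman_space_def set_integrable_def using hol by simp
qed

lemma bergman_L1:
  assumes a: "\<alpha> > -1" and f: "f \<in> bergman_space \<alpha>"
  shows "f holomorphic_on unit_disk" "integrable lborel (\<lambda>z. indicator unit_disk z *\<^sub>R (cmod (f z) * wt \<alpha> z))"
proof -
  show hol: "f holomorphic_on unit_disk" using f by (simp add: bergman_space_def)
  have fi: "integrable lborel (\<lambda>z. indicator unit_disk z *\<^sub>R ((cmod (f z))\<^sup>2 * wt \<alpha> z))"
    using f by (simp add: bergman_space_def set_integrable_def)
  have fc: "continuous_on unit_disk f" using hol by (rule holomorphic_on_imp_continuous_on)
  show "integrable lborel (\<lambda>z. indicator unit_disk z *\<^sub>R (cmod (f z) * wt \<alpha> z))"
  proof (rule Bochner_Integration.integrable_bound[OF Bochner_Integration.integrable_add[OF wt_int[OF a] fi]])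
    show "(\<lambda>z. indicator unit_disk z *\<^sub>R (cmod (f z) * wt \<alpha> z)) \<in> borel_measurable lborel"
      by (rule meas_ind) (auto intro!: continuous_intros fc wt_cont)
    show "AE z in lborel. norm (indicator unit_disk z *\<^sub>R (cmod (f z) * wt \<alpha> z))
          \<le> norm (indicator unit_disk z *\<^sub>R wt \<alpha> z + indicator unit_disk z *\<^sub>R ((cmod (f z))\<^sup>2 * wt \<alpha> z))"
    proof (intro AE_I2)
      fix z :: complex
      have "cmod (f z) \<le> 1 + (cmod (f z))\<^sup>2"
      proof (cases "cmod (f z) \<le> 1")
        case True thus ?thesis by (smt (verit) zero_le_power2)
      next
        case False
        hence "cmod (f z) * 1 \<le> cmod (f z) * cmod (f z)" by (intro mult_left_mono) auto
        thus ?thesis by (simp add: power2_eq_square)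
      qed
      hence "cmod (f z) * wt \<alpha> z \<le> (1 + (cmod (f z))\<^sup>2) * wt \<alpha> z" by (intro mult_right_mono) auto
      thus "norm (indicator unit_disk z *\<^sub>R (cmod (f z) * wt \<alpha> z))
          \<le> norm (indicator unit_disk z *\<^sub>R wt \<alpha> z + indicator unit_disk z *\<^sub>R ((cmod (f z))\<^sup>2 * wt \<alpha> z))"
        by (cases "z \<in> unit_disk") (auto simp: algebra_simps)
    qed
  qed
qed

lemma compact_bound:
  assumes "continuous_on (cball 0 s) h"
  obtains M where "\<And>z. cmod z \<le> s \<Longrightarrow> cmod (h z) \<le> M"
proof -
  have "compact (h ` cball 0 s)" by (intro compact_continuous_image assms) simp
  then obtain M where "\<forall>x\<in>h ` cball 0 s. norm x \<le> M"
    using compact_imp_bounded bounded_iff by metis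
  thus ?thesis using that[of M] by (auto simp: dist_norm)
qed

lemma int_scale:
  assumes "integrable lborel (\<lambda>z. indicator unit_disk z *\<^sub>R (H z * wt \<alpha> z))"
  shows "integrable lborel (\<lambda>z. indicator unit_disk z *\<^sub>R ((k * H z) * wt \<alpha> z))"
proof -
  have "(\<lambda>z. indicator unit_disk z *\<^sub>R ((k * H z) * wt \<alpha> z)) = (\<lambda>z. k * (indicator unit_disk z *\<^sub>R (H z * wt \<alpha> z)))"
    by (auto simp: fun_eq_iff)
  thus ?thesis using integrable_mult_right[OF assms, of k] by simp
qed

lemma int_scale_eq:
  "integral\<^sup>L lborel (\<lambda>z. indicator unit_disk z *\<^sub>R ((k * H z) * wt \<alpha> z)) =
   k * integral\<^sup>L lborel (\<lambda>z. indicator unit_disk z *\<^sub>R (H z * wt \<alpha> z))"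
proof -
  have "(\<lambda>z. indicator unit_disk z *\<^sub>R ((k * H z) * wt \<alpha> z)) = (\<lambda>z. k * (indicator unit_disk z *\<^sub>R (H z * wt \<alpha> z)))"
    by (auto simp: fun_eq_iff)
  thus ?thesis by simp
qed

lemma K1_series':
  assumes "cmod (cnj v * u) < 1"
  shows "(\<lambda>m. complex_of_real ((\<alpha> + 2) * (pochhammer (\<alpha> + 3) m / fact m)) * cnj v ^ m * u ^ Suc m) sums K1 \<alpha> v u"
proof -
  have "cmod (cnj v * u) = cmod (cnj (cnj v * u))" by (simp only: complex_mod_cnj)
  from K1_series[OF assms, of \<alpha>]
  have "(\<lambda>m. cnj (complex_of_real ((\<alpha> + 2) * (pochhammer (\<alpha> + 3) m / fact m)) * v ^ m * cnj u ^ Suc m)) sums cnj (cnj (K1 \<alpha> v u))"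
    by (simp only: sums_cnj)
  thus ?thesis by simp
qed

lemma small_prod: "cmod v \<le> t \<Longrightarrow> t < 1 \<Longrightarrow> cmod w \<le> 1 \<Longrightarrow> cmod (cnj v * w) < 1"
proof -
  assume a: "cmod v \<le> t" "t < 1" "cmod w \<le> 1"
  have "cmod v * cmod w \<le> cmod v" using a(3) by (simp add: mult_left_le)
  thus ?thesis using a by (simp add: norm_mult)
qed

theorem theorem6p1:
  fixes \<alpha> :: real and a b c d :: complex
  defines "\<phi> \<equiv> lfm a b c d"
      and "\<sigma> \<equiv> lfm (cnj a) (- cnj c) (- cnj b) (cnj d)"
  assumes alpha: "\<alpha> > -1"
      and nondeg: "a * d - b * c \<noteq> 0"
      and selfmap: "\<forall>z\<in>unit_disk. c * z + d \<noteq> 0 \<and> \<phi> z \<in> unit_disk"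
      and supnorm: "(SUP z\<in>unit_disk. cmod (\<phi> z)) < 1"
  shows "\<forall>f\<in>bergman_space \<alpha>. \<forall>g\<in>bergman_space \<alpha>.
           Tmul (K1 \<alpha> (\<sigma> 0)) (Dop \<phi> f) \<in> bergman_space \<alpha> \<and>
           Tmul (K1 \<alpha> (\<phi> 0)) (Dop \<sigma> g) \<in> bergman_space \<alpha> \<and>
           bergman_inner \<alpha> (Tmul (K1 \<alpha> (\<sigma> 0)) (Dop \<phi> f)) g =
           bergman_inner \<alpha> f (Tmul (K1 \<alpha> (\<phi> 0)) (Dop \<sigma> g))"
proof (intro ballI)
  fix f g assume f: "f \<in> bergman_space \<alpha>" and g: "g \<in> bergman_space \<alpha>"
  obtain s r where s0: "0 \<le> s" and s1: "s < 1" and r0: "0 \<le> r" and r1: "r < 1" and d0: "d \<noteq> 0"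
    and phib: "\<And>z. cmod z \<le> 1 \<Longrightarrow> c * z + d \<noteq> 0 \<and> cmod (\<phi> z) \<le> s"
    and sigb: "\<And>u. cmod u \<le> 1 \<Longrightarrow> - cnj b * u + cnj d \<noteq> 0 \<and> cmod (\<sigma> u) \<le> r"
    by (rule geom[OF nondeg selfmap[unfolded \<phi>_def] supnorm[unfolded \<phi>_def], folded \<phi>_def \<sigma>_def]) blast
  define t where "t = max s r"
  have t0: "0 \<le> t" and t1: "t < 1" using s0 s1 r0 r1 by (auto simp: t_def)
  define KM where "KM = (\<alpha> + 2) / (1 - t) powr (\<alpha> + 3)"
  have KM0: "KM \<ge> 0" using alpha t1 by (simp add: KM_def)
  have Kb: "cmod (K1 \<alpha> v u) \<le> KM" if "cmod v \<le> t" "cmod u \<le> 1" for v u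
    unfolding KM_def by (rule K1_bound[OF alpha that(1) t1 that(2)])
  have inD: "cmod z \<le> 1" if "z \<in> unit_disk" for z using that by simp
  have phit: "cmod (\<phi> z) \<le> t" if "z \<in> unit_disk" for z
    using phib[OF inD[OF that]] by (auto simp: t_def)
  have sigt: "cmod (\<sigma> z) \<le> t" if "z \<in> unit_disk" for z
    using sigb[OF inD[OF that]] by (auto simp: t_def)
  have phiD: "\<phi> z \<in> unit_disk" if "z \<in> unit_disk" for z using phit[OF that] t1 by simp
  have sigD: "\<sigma> z \<in> unit_disk" if "z \<in> unit_disk" for z using sigt[OF that] t1 by simp
  have phi0: "cmod (\<phi> 0) \<le> t" and sig0: "cmod (\<sigma> 0) \<le> t" using phit[of 0] sigt[of 0] by auto
  have phihol: "\<phi> holomorphic_on unit_disk"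
    unfolding \<phi>_def lfm_def by (intro holomorphic_intros) (use phib[OF inD] in \<open>auto simp: \<phi>_def\<close>)
  have sighol: "\<sigma> holomorphic_on unit_disk"
    unfolding \<sigma>_def lfm_def by (intro holomorphic_intros) (use sigb[OF inD] in \<open>auto simp: \<sigma>_def add.commute\<close>)
  have phic: "continuous_on unit_disk \<phi>" by (rule holomorphic_on_imp_continuous_on[OF phihol])
  have hf: "f holomorphic_on unit_disk" and f1: "integrable lborel (\<lambda>z. indicator unit_disk z *\<^sub>R (cmod (f z) * wt \<alpha> z))"
    using bergman_L1[OF alpha f] by auto
  have hg: "g holomorphic_on unit_disk" and g1: "integrable lborel (\<lambda>z. indicator unit_disk z *\<^sub>R (cmod (g z) * wt \<alpha> z))"
    using bergman_L1[OF alpha g] by auto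
  have fc: "continuous_on unit_disk f" by (rule holomorphic_on_imp_continuous_on[OF hf])
  have gc: "continuous_on unit_disk g" by (rule holomorphic_on_imp_continuous_on[OF hg])
  have Ksh: "K1 \<alpha> (\<sigma> 0) holomorphic_on unit_disk" by (rule K1_hol) (use sig0 t1 in auto)
  have Kph: "K1 \<alpha> (\<phi> 0) holomorphic_on unit_disk" by (rule K1_hol) (use phi0 t1 in auto)
  have Ksc: "continuous_on unit_disk (K1 \<alpha> (\<sigma> 0))" by (rule holomorphic_on_imp_continuous_on[OF Ksh])
  have dfh: "deriv f holomorphic_on unit_disk" by (rule holomorphic_deriv[OF hf]) simp
  have dgh: "deriv g holomorphic_on unit_disk" by (rule holomorphic_deriv[OF hg]) simp
  have mem1: "Tmul (K1 \<alpha> (\<sigma> 0)) (Dop \<phi> f) \<in> bergman_space \<alpha>"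
  proof -
    have "continuous_on (cball 0 t) (deriv f)"
      by (rule holomorphic_on_imp_continuous_on, rule holomorphic_on_subset[OF dfh]) (use t1 in auto)
    then obtain DM where DM: "\<And>z. cmod z \<le> t \<Longrightarrow> cmod (deriv f z) \<le> DM" by (rule compact_bound) blast
    show ?thesis unfolding Tmul_def Dop_def
    proof (rule bounded_in_bergman[OF alpha])
      have "\<phi> ` unit_disk \<subseteq> unit_disk" using phiD by auto
      from holomorphic_on_compose_gen[OF phihol dfh this]
      have "(\<lambda>z. deriv f (\<phi> z)) holomorphic_on unit_disk" by (simp add: o_def)
      thus "(\<lambda>z. K1 \<alpha> (\<sigma> 0) z * deriv f (\<phi> z)) holomorphic_on unit_disk"
        by (intro holomorphic_on_mult Ksh)
      fix z :: complex assume z: "z \<in> unit_disk"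
      have "cmod (K1 \<alpha> (\<sigma> 0) z * deriv f (\<phi> z)) \<le> KM * DM"
        unfolding norm_mult using Kb[OF sig0 inD[OF z]] DM[OF phit[OF z]] KM0
        by (intro mult_mono) auto
      thus "cmod (K1 \<alpha> (\<sigma> 0) z * deriv f (\<phi> z)) \<le> KM * DM" .
    qed
  qed
  have mem2: "Tmul (K1 \<alpha> (\<phi> 0)) (Dop \<sigma> g) \<in> bergman_space \<alpha>"
  proof -
    have "continuous_on (cball 0 t) (deriv g)"
      by (rule holomorphic_on_imp_continuous_on, rule holomorphic_on_subset[OF dgh]) (use t1 in auto)
    then obtain DM where DM: "\<And>z. cmod z \<le> t \<Longrightarrow> cmod (deriv g z) \<le> DM" by (rule compact_bound) blast
    show ?thesis unfolding Tmul_def Dop_def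
    proof (rule bounded_in_bergman[OF alpha])
      have "\<sigma> ` unit_disk \<subseteq> unit_disk" using sigD by auto
      from holomorphic_on_compose_gen[OF sighol dgh this]
      have "(\<lambda>z. deriv g (\<sigma> z)) holomorphic_on unit_disk" by (simp add: o_def)
      thus "(\<lambda>z. K1 \<alpha> (\<phi> 0) z * deriv g (\<sigma> z)) holomorphic_on unit_disk"
        by (intro holomorphic_on_mult Kph)
      fix z :: complex assume z: "z \<in> unit_disk"
      have "cmod (K1 \<alpha> (\<phi> 0) z * deriv g (\<sigma> z)) \<le> KM * DM"
        unfolding norm_mult using Kb[OF phi0 inD[OF z]] DM[OF sigt[OF z]] KM0
        by (intro mult_mono) auto
      thus "cmod (K1 \<alpha> (\<phi> 0) z * deriv g (\<sigma> z)) \<le> KM * DM" .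
    qed
  qed
  have ident: "bergman_inner \<alpha> (Tmul (K1 \<alpha> (\<sigma> 0)) (Dop \<phi> f)) g =
           bergman_inner \<alpha> f (Tmul (K1 \<alpha> (\<phi> 0)) (Dop \<sigma> g))"
  proof -
    define \<kappa> where "\<kappa> = complex_of_real ((\<alpha> + 1) / pi)"
    define cc where "cc = (\<lambda>m. (\<alpha> + 2) * (pochhammer (\<alpha> + 3) m / fact m))"
    have cc0: "cc m \<ge> 0" for m
    proof -
      have "pochhammer (\<alpha> + 3) m \<ge> 0" using alpha by (intro pochhammer_nonneg) auto
      thus ?thesis unfolding cc_def using alpha by simp
    qed
    define bb where "bb = (\<lambda>m. cc m * t^m)"
    have bb0: "bb m \<ge> 0" for m unfolding bb_def using cc0 t0 by simp
    have sbb: "summable bb"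
      unfolding bb_def cc_def using summable_mult[OF binom_summable[OF t0 t1, of "\<alpha> + 3"], of "\<alpha> + 2"]
      by (simp add: mult_ac)
    define FN where "FN = integral\<^sup>L lborel (\<lambda>z. indicator unit_disk z *\<^sub>R (cmod (f z) * wt \<alpha> z))"
    define GN where "GN = integral\<^sup>L lborel (\<lambda>z. indicator unit_disk z *\<^sub>R (cmod (g z) * wt \<alpha> z))"
    define A where "A = (\<lambda>m. IP \<alpha> (\<lambda>u. f u * cnj u ^ Suc m))"
    define B where "B = (\<lambda>m. IP \<alpha> (\<lambda>z. K1 \<alpha> (\<sigma> 0) z * \<phi> z ^ m * cnj (g z)))"
    define C where "C = (\<lambda>m. IP \<alpha> (\<lambda>z. g z * cnj (K1 \<alpha> (\<sigma> 0) z) * cnj (\<phi> z) ^ m))"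
    have Ab: "norm (A m) \<le> FN" for m
      unfolding A_def FN_def
    proof (rule IP_bound[OF _ f1])
      show "continuous_on unit_disk (\<lambda>u. f u * cnj u ^ Suc m)" by (intro continuous_intros fc)
      fix u :: complex assume u: "u \<in> unit_disk"
      have "cmod u ^ Suc m \<le> 1" using u by (intro power_le_one) auto
      hence "cmod (f u) * cmod u ^ Suc m \<le> cmod (f u) * 1" by (intro mult_left_mono) auto
      thus "norm (f u * cnj u ^ Suc m) \<le> cmod (f u)" by (simp add: norm_mult norm_power)
    qed
    have Cb: "norm (C m) \<le> t^m * KM * GN" for m
    proof -
      have "norm (C m) \<le> integral\<^sup>L lborel (\<lambda>z. indicator unit_disk z *\<^sub>R ((t^m * KM * cmod (g z)) * wt \<alpha> z))"
        unfolding C_def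
      proof (rule IP_bound)
        show "continuous_on unit_disk (\<lambda>z. g z * cnj (K1 \<alpha> (\<sigma> 0) z) * cnj (\<phi> z) ^ m)"
          by (intro continuous_intros gc Ksc phic)
        show "integrable lborel (\<lambda>z. indicator unit_disk z *\<^sub>R ((t^m * KM * cmod (g z)) * wt \<alpha> z))"
          using int_scale[OF g1, of "t^m * KM"] by (simp add: mult_ac)
        fix z :: complex assume z: "z \<in> unit_disk"
        have "cmod (g z) * cmod (K1 \<alpha> (\<sigma> 0) z) * cmod (\<phi> z) ^ m \<le> cmod (g z) * KM * t^m"
          using Kb[OF sig0 inD[OF z]] phit[OF z] KM0
          by (intro mult_mono power_mono mult_left_mono) auto
        thus "norm (g z * cnj (K1 \<alpha> (\<sigma> 0) z) * cnj (\<phi> z) ^ m) \<le> t^m * KM * cmod (g z)"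
          by (simp add: norm_mult norm_power mult_ac)
      qed
      also have "\<dots> = t^m * KM * GN"
        unfolding GN_def using int_scale_eq[of "t^m * KM" "\<lambda>z. cmod (g z)" \<alpha>] by (simp add: mult_ac)
      finally show ?thesis .
    qed
    have CB: "cnj (C m) = B m" for m
      unfolding C_def B_def IP_cnj by (rule IP_cong) (simp add: mult_ac)
    have L1: "deriv f (\<phi> z) = \<kappa> * IP \<alpha> (\<lambda>u. f u * cnj (K1 \<alpha> (\<phi> z) u))" if z: "z \<in> unit_disk" for z
      using RK[OF alpha hf f1 phiD[OF z]] unfolding \<kappa>_def IP_def by simp
    have L2: "(\<lambda>m. complex_of_real (cc m) * v^m * A m) sums IP \<alpha> (\<lambda>u. f u * cnj (K1 \<alpha> v u))"
      if v: "cmod v \<le> t" for v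
    proof -
      have "(\<lambda>m. IP \<alpha> (\<lambda>u. (complex_of_real (cc m) * v^m) * (f u * cnj u ^ Suc m))) sums IP \<alpha> (\<lambda>u. f u * cnj (K1 \<alpha> v u))"
      proof (rule IP_series[OF _ _ f1 _ sbb bb0])
        show "continuous_on unit_disk (\<lambda>u. (complex_of_real (cc m) * v^m) * (f u * cnj u ^ Suc m))" for m
          by (intro continuous_intros fc)
        show "cmod (f u) \<ge> 0" for u by simp
        fix m u assume u: "u \<in> unit_disk"
        have "cmod u ^ Suc m \<le> 1" using u by (intro power_le_one) auto
        hence "cc m * cmod v ^ m * (cmod (f u) * cmod u ^ Suc m) \<le> cc m * t^m * (cmod (f u) * 1)"
          using v cc0[of m] t0 by (intro mult_mono mult_left_mono power_mono) auto
        thus "norm ((complex_of_real (cc m) * v^m) * (f u * cnj u ^ Suc m)) \<le> bb m * cmod (f u)"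
          using cc0[of m] by (simp add: bb_def norm_mult norm_power mult_ac)
      next
        fix u assume u: "u \<in> unit_disk"
        have "cmod (cnj v * u) < 1" by (rule small_prod[OF v t1 inD[OF u]])
        from sums_mult[OF K1_series[OF this, of \<alpha>], of "f u"]
        show "(\<lambda>m. (complex_of_real (cc m) * v^m) * (f u * cnj u ^ Suc m)) sums (f u * cnj (K1 \<alpha> v u))"
          by (simp add: cc_def mult_ac)
      qed
      thus ?thesis unfolding IP_cmult A_def .
    qed
    have L3: "(\<lambda>m. \<kappa> * complex_of_real (cc m) * A m * B m) sums IP \<alpha> (\<lambda>z. K1 \<alpha> (\<sigma> 0) z * deriv f (\<phi> z) * cnj (g z))"
    proof -
      have "(\<lambda>m. IP \<alpha> (\<lambda>z. (\<kappa> * complex_of_real (cc m) * A m) * (K1 \<alpha> (\<sigma> 0) z * \<phi> z ^ m * cnj (g z))))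
             sums IP \<alpha> (\<lambda>z. K1 \<alpha> (\<sigma> 0) z * deriv f (\<phi> z) * cnj (g z))"
      proof (rule IP_series[OF _ _ int_scale[OF g1, of "cmod \<kappa> * FN * KM"] _ sbb bb0])
        show "continuous_on unit_disk (\<lambda>z. (\<kappa> * complex_of_real (cc m) * A m) * (K1 \<alpha> (\<sigma> 0) z * \<phi> z ^ m * cnj (g z)))" for m
          by (intro continuous_intros gc Ksc phic)
        have FN0: "FN \<ge> 0" using Ab[of 0] by (auto intro: order_trans[OF norm_ge_zero])
        show "cmod \<kappa> * FN * KM * cmod (g z) \<ge> 0" for z using FN0 KM0 by simp
        fix m z assume z: "z \<in> unit_disk"
        have "cmod \<kappa> * cc m * norm (A m) * (cmod (K1 \<alpha> (\<sigma> 0) z) * cmod (\<phi> z) ^ m * cmod (g z))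
              \<le> cmod \<kappa> * cc m * FN * (KM * t^m * cmod (g z))"
          using Ab[of m] Kb[OF sig0 inD[OF z]] phit[OF z] KM0 cc0[of m] FN0
          by (intro mult_mono power_mono mult_left_mono mult_right_mono mult_nonneg_nonneg) auto
        thus "norm ((\<kappa> * complex_of_real (cc m) * A m) * (K1 \<alpha> (\<sigma> 0) z * \<phi> z ^ m * cnj (g z)))
              \<le> bb m * (cmod \<kappa> * FN * KM * cmod (g z))"
          using cc0[of m] by (simp add: bb_def norm_mult norm_power mult_ac)
      next
        fix z assume z: "z \<in> unit_disk"
        from sums_mult[OF L2[OF phit[OF z]], of \<kappa>]
        have "(\<lambda>m. \<kappa> * (complex_of_real (cc m) * \<phi> z ^ m * A m)) sums deriv f (\<phi> z)"
          using L1[OF z] by simp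
        from sums_mult[OF this, of "K1 \<alpha> (\<sigma> 0) z * cnj (g z)"]
        show "(\<lambda>m. (\<kappa> * complex_of_real (cc m) * A m) * (K1 \<alpha> (\<sigma> 0) z * \<phi> z ^ m * cnj (g z)))
              sums (K1 \<alpha> (\<sigma> 0) z * deriv f (\<phi> z) * cnj (g z))"
          by (simp add: mult_ac)
      qed
      thus ?thesis unfolding IP_cmult B_def .
    qed
    have R1: "deriv g (\<sigma> u) = \<kappa> * IP \<alpha> (\<lambda>z. g z * cnj (K1 \<alpha> (\<sigma> u) z))" if u: "u \<in> unit_disk" for u
      using RK[OF alpha hg g1 sigD[OF u]] unfolding \<kappa>_def IP_def by simp
    have R2: "K1 \<alpha> (\<phi> 0) u * IP \<alpha> (\<lambda>z. g z * cnj (K1 \<alpha> (\<sigma> u) z)) =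
              IP \<alpha> (\<lambda>z. g z * cnj (K1 \<alpha> (\<sigma> 0) z) * K1 \<alpha> (\<phi> z) u)" if u: "u \<in> unit_disk" for u
    proof -
      have "K1 \<alpha> (\<phi> 0) u * IP \<alpha> (\<lambda>z. g z * cnj (K1 \<alpha> (\<sigma> u) z)) =
            IP \<alpha> (\<lambda>z. K1 \<alpha> (\<phi> 0) u * (g z * cnj (K1 \<alpha> (\<sigma> u) z)))" by (simp only: IP_cmult)
      also have "\<dots> = IP \<alpha> (\<lambda>z. g z * cnj (K1 \<alpha> (\<sigma> 0) z) * K1 \<alpha> (\<phi> z) u)"
      proof (rule IP_cong)
        fix z :: complex assume z: "z \<in> unit_disk"
        have "K1 \<alpha> (\<phi> 0) u * cnj (K1 \<alpha> (\<sigma> u) z) = cnj (K1 \<alpha> (\<sigma> 0) z) * K1 \<alpha> (\<phi> z) u"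
          unfolding \<phi>_def \<sigma>_def
        proof (rule kernel_identity[OF d0])
          show "c * z + d \<noteq> 0" using phib[OF inD[OF z]] by simp
          show "- cnj b * u + cnj d \<noteq> 0" using sigb[OF inD[OF u]] by simp
          show "cmod (cnj (lfm a b c d 0) * u) < 1"
            using small_prod[OF phi0 t1 inD[OF u]] by (simp add: \<phi>_def)
          show "cmod (cnj (lfm (cnj a) (- cnj c) (- cnj b) (cnj d) u) * z) < 1"
            using small_prod[OF sigt[OF u] t1 inD[OF z]] by (simp add: \<sigma>_def)
          show "cmod (cnj (lfm (cnj a) (- cnj c) (- cnj b) (cnj d) 0) * z) < 1"
            using small_prod[OF sig0 t1 inD[OF z]] by (simp add: \<sigma>_def)
          show "cmod (cnj (lfm a b c d z) * u) < 1"
            using small_prod[OF phit[OF z] t1 inD[OF u]] by (simp add: \<phi>_def)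
        qed
        thus "K1 \<alpha> (\<phi> 0) u * (g z * cnj (K1 \<alpha> (\<sigma> u) z)) = g z * cnj (K1 \<alpha> (\<sigma> 0) z) * K1 \<alpha> (\<phi> z) u"
          by (simp add: mult_ac)
      qed
      finally show ?thesis .
    qed
    have R3: "(\<lambda>m. complex_of_real (cc m) * u ^ Suc m * C m) sums IP \<alpha> (\<lambda>z. g z * cnj (K1 \<alpha> (\<sigma> 0) z) * K1 \<alpha> (\<phi> z) u)"
      if u: "u \<in> unit_disk" for u
    proof -
      have "(\<lambda>m. IP \<alpha> (\<lambda>z. (complex_of_real (cc m) * u ^ Suc m) * (g z * cnj (K1 \<alpha> (\<sigma> 0) z) * cnj (\<phi> z) ^ m)))
             sums IP \<alpha> (\<lambda>z. g z * cnj (K1 \<alpha> (\<sigma> 0) z) * K1 \<alpha> (\<phi> z) u)"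
      proof (rule IP_series[OF _ _ int_scale[OF g1, of KM] _ sbb bb0])
        show "continuous_on unit_disk (\<lambda>z. (complex_of_real (cc m) * u ^ Suc m) * (g z * cnj (K1 \<alpha> (\<sigma> 0) z) * cnj (\<phi> z) ^ m))" for m
          by (intro continuous_intros gc Ksc phic)
        show "KM * cmod (g z) \<ge> 0" for z using KM0 by simp
        fix m z assume z: "z \<in> unit_disk"
        have "cmod u ^ Suc m \<le> 1" using u by (intro power_le_one) auto
        hence "cc m * cmod u ^ Suc m * (cmod (g z) * cmod (K1 \<alpha> (\<sigma> 0) z) * cmod (\<phi> z) ^ m)
              \<le> cc m * 1 * (cmod (g z) * KM * t^m)"
          using Kb[OF sig0 inD[OF z]] phit[OF z] KM0 cc0[of m]
          by (intro mult_mono power_mono mult_left_mono mult_right_mono mult_nonneg_nonneg) auto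
        thus "norm ((complex_of_real (cc m) * u ^ Suc m) * (g z * cnj (K1 \<alpha> (\<sigma> 0) z) * cnj (\<phi> z) ^ m))
              \<le> bb m * (KM * cmod (g z))"
          using cc0[of m] by (simp add: bb_def norm_mult norm_power mult_ac)
      next
        fix z assume z: "z \<in> unit_disk"
        have "cmod (cnj (\<phi> z) * u) < 1" by (rule small_prod[OF phit[OF z] t1 inD[OF u]])
        from sums_mult[OF K1_series'[OF this, of \<alpha>], of "g z * cnj (K1 \<alpha> (\<sigma> 0) z)"]
        show "(\<lambda>m. (complex_of_real (cc m) * u ^ Suc m) * (g z * cnj (K1 \<alpha> (\<sigma> 0) z) * cnj (\<phi> z) ^ m))
              sums (g z * cnj (K1 \<alpha> (\<sigma> 0) z) * K1 \<alpha> (\<phi> z) u)"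
          by (simp add: cc_def mult_ac)
      qed
      thus ?thesis unfolding IP_cmult C_def .
    qed
    have R4: "(\<lambda>m. \<kappa> * complex_of_real (cc m) * u ^ Suc m * C m) sums (K1 \<alpha> (\<phi> 0) u * deriv g (\<sigma> u))"
      if u: "u \<in> unit_disk" for u
    proof -
      from sums_mult[OF R3[OF u], of \<kappa>]
      have "(\<lambda>m. \<kappa> * (complex_of_real (cc m) * u ^ Suc m * C m)) sums
             (\<kappa> * (K1 \<alpha> (\<phi> 0) u * IP \<alpha> (\<lambda>z. g z * cnj (K1 \<alpha> (\<sigma> u) z))))"
        using R2[OF u] by simp
      moreover have "\<kappa> * (K1 \<alpha> (\<phi> 0) u * IP \<alpha> (\<lambda>z. g z * cnj (K1 \<alpha> (\<sigma> u) z))) = K1 \<alpha> (\<phi> 0) u * deriv g (\<sigma> u)"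
        using R1[OF u] by (simp add: mult_ac)
      ultimately show ?thesis by (simp add: mult_ac)
    qed
    have kr: "cnj \<kappa> = \<kappa>" by (simp add: \<kappa>_def)
    have R5: "(\<lambda>m. \<kappa> * complex_of_real (cc m) * B m * A m) sums
              IP \<alpha> (\<lambda>u. f u * cnj (K1 \<alpha> (\<phi> 0) u * deriv g (\<sigma> u)))"
    proof -
      have "(\<lambda>m. IP \<alpha> (\<lambda>u. (\<kappa> * complex_of_real (cc m) * cnj (C m)) * (f u * cnj u ^ Suc m)))
             sums IP \<alpha> (\<lambda>u. f u * cnj (K1 \<alpha> (\<phi> 0) u * deriv g (\<sigma> u)))"
      proof (rule IP_series[OF _ _ int_scale[OF f1, of "cmod \<kappa> * KM * GN"] _ sbb bb0])
        show "continuous_on unit_disk (\<lambda>u. (\<kappa> * complex_of_real (cc m) * cnj (C m)) * (f u * cnj u ^ Suc m))" for m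
          by (intro continuous_intros fc)
        have GN0: "GN \<ge> 0" unfolding GN_def
          by (intro Bochner_Integration.integral_nonneg) (auto simp: indicator_def)
        show "cmod \<kappa> * KM * GN * cmod (f u) \<ge> 0" for u using GN0 KM0 by simp
        fix m u assume u: "u \<in> unit_disk"
        have "cmod u ^ Suc m \<le> 1" using u by (intro power_le_one) auto
        hence "cmod \<kappa> * cc m * norm (C m) * (cmod (f u) * cmod u ^ Suc m)
              \<le> cmod \<kappa> * cc m * (t^m * KM * GN) * (cmod (f u) * 1)"
          using Cb[of m] cc0[of m] KM0 GN0 t0
          by (intro mult_mono mult_left_mono mult_right_mono mult_nonneg_nonneg) auto
        thus "norm ((\<kappa> * complex_of_real (cc m) * cnj (C m)) * (f u * cnj u ^ Suc m))
              \<le> bb m * (cmod \<kappa> * KM * GN * cmod (f u))"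
          using cc0[of m] by (simp add: bb_def norm_mult norm_power mult_ac)
      next
        fix u assume u: "u \<in> unit_disk"
        have "(\<lambda>m. cnj (\<kappa> * complex_of_real (cc m) * u ^ Suc m * C m)) sums cnj (K1 \<alpha> (\<phi> 0) u * deriv g (\<sigma> u))"
          using R4[OF u] by (simp only: sums_cnj)
        from sums_mult[OF this, of "f u"]
        show "(\<lambda>m. (\<kappa> * complex_of_real (cc m) * cnj (C m)) * (f u * cnj u ^ Suc m))
              sums (f u * cnj (K1 \<alpha> (\<phi> 0) u * deriv g (\<sigma> u)))"
          by (simp add: kr mult_ac)
      qed
      thus ?thesis unfolding IP_cmult CB A_def .
    qed
    have "bergman_inner \<alpha> (Tmul (K1 \<alpha> (\<sigma> 0)) (Dop \<phi> f)) g =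
          \<kappa> * IP \<alpha> (\<lambda>z. K1 \<alpha> (\<sigma> 0) z * deriv f (\<phi> z) * cnj (g z))"
      unfolding bergman_inner_IP \<kappa>_def Tmul_def Dop_def ..
    also have "IP \<alpha> (\<lambda>z. K1 \<alpha> (\<sigma> 0) z * deriv f (\<phi> z) * cnj (g z)) =
               IP \<alpha> (\<lambda>u. f u * cnj (K1 \<alpha> (\<phi> 0) u * deriv g (\<sigma> u)))"
    proof -
      have "(\<lambda>m. \<kappa> * complex_of_real (cc m) * B m * A m) = (\<lambda>m. \<kappa> * complex_of_real (cc m) * A m * B m)"
        by (simp add: mult_ac)
      with R5 L3 show ?thesis by (metis sums_unique2)
    qed
    also have "\<kappa> * IP \<alpha> (\<lambda>u. f u * cnj (K1 \<alpha> (\<phi> 0) u * deriv g (\<sigma> u))) =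
               bergman_inner \<alpha> f (Tmul (K1 \<alpha> (\<phi> 0)) (Dop \<sigma> g))"
      unfolding bergman_inner_IP \<kappa>_def Tmul_def Dop_def ..
    finally show ?thesis .
  qed
  show "Tmul (K1 \<alpha> (\<sigma> 0)) (Dop \<phi> f) \<in> bergman_space \<alpha> \<and>
           Tmul (K1 \<alpha> (\<phi> 0)) (Dop \<sigma> g) \<in> bergman_space \<alpha> \<and>
           bergman_inner \<alpha> (Tmul (K1 \<alpha> (\<sigma> 0)) (Dop \<phi> f)) g =
           bergman_inner \<alpha> f (Tmul (K1 \<alpha> (\<phi> 0)) (Dop \<sigma> g))"
    using mem1 mem2 ident by blast
qed

end
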